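(* Let $\mathbf V$ be a set of unlabelled 1-graphs and let $\mathbf G_2(\mathbf V)$ be the set of unlabelled 2-graphs all of whose vertex graphs lie (up to isomorphism) in $\mathbf V$. Let $\overline{\mathbf G_2(\mathbf V)}=\{\Gamma'/\Theta:\ \Theta\subseteq\Gamma'\in\mathbf G_2(\mathbf V)\}$ be its contraction closure. Then the subalgebra $\langle\overline{\mathbf G_2(\mathbf V)}\rangle$ of the 2-graph bialgebra $\mathcal G$ generated by $\overline{\mathbf G_2(\mathbf V)}$ is a subbialgebra of $\mathcal G$.
   Context: A 1-graph is $(\mathcal V,\mathcal H,\nu,\iota)$: finite sets, $\nu:\mathcal H\to\mathcal V$, $\iota$ an involution of $\mathcal H$; isomorphisms are pairs of bijections intertwining $\nu$ and $\iota$. A 2-graph is $G=(\mathcal V,\mathcal H,\nu,\iota;\mathcal S,\mu,\sigma_1,\sigma_2)$: a 1-graph together with a finite set $\mathcal S$ of strand sections, $\mu:\mathcal S\to\mathcal H$, a fixed-point free involution $\sigma_1$ of $\mathcal S$ with $\nu\circ\mu\circ\sigma_1=\nu\circ\mu$, and an involution $\sigma_2$ of $\mathcal S$ with $\iota\circ\mu=\mu\circ\sigma_2$ such that $s$ is fixed by $\sigma_2$ iff $\mu(s)$ is fixed by $\iota$. The vertex graph of $v\in\mathcal V$ is the 1-graph $g_v=(\nu^{-1}(v),(\nu\circ\mu)^{-1}(v),\mu|,\sigma_1|)$. Edges are two-element orbits of $\iota$; edge strands are two-element orbits of $\sigma_2$; fixed points are external. A subgraph $H\subseteq G$ differs from $G$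 only in having a subset of the edges and the corresponding subset of edge strands (the removed ones becoming external). An external face of $H$ is a tuple $(s_1,\dots,s_{2n})$ of distinct strand sections with $s_{2i}=\sigma_1(s_{2i-1})$, $s_{2i+1}=\sigma_{2,H}(s_{2i})$, $s_1,s_{2n}$ fixed by $\sigma_{2,H}$. The contraction $G/H$ has vertices the connected components of $H$, half-edges and strand sections the external ones of $H$, $\nu$ mapping to the component, $\mu$ restricted, edges and edge strands those of $G$ not in $H$, and $\sigma_1$ pairing $s_1$ with $s_{2n}$ for each external face of $H$. Unlabelled 2-graphs are isomorphism classes (bijections on vertices, half-edges, strand sections intertwining all structure). The bialgebra $\mathcal G$ is the $\mathbb Q$-vector space with basis all unlabelled 2-graphs, product disjoint union, unit the empty 2-graph, coproduct $\Delta(\Gamma)=\sum_{\Theta\subseteq\Gamma}\Theta\otimes\Gamma/\Theta$ (sum over subgraphs) and counit $\epsilon(\Gamma)=1$ if $\Gamma$ has no edges and $0$ otherwise. *)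

theory Defs
  imports Complex_Main
begin

record graph1 =
  V1 :: "nat set"
  H1 :: "nat set"
  nu1 :: "nat \<Rightarrow> nat"
  iota1 :: "nat \<Rightarrow> nat"

definition wf1 :: "graph1 \<Rightarrow> bool" where
  "wf1 g \<longleftrightarrow> finite (V1 g) \<and> finite (H1 g)
     \<and> (\<forall>h\<in>H1 g. nu1 g h \<in> V1 g)
     \<and> (\<forall>h\<in>H1 g. iota1 g h \<in> H1 g \<and> iota1 g (iota1 g h) = h)"

definition iso1 :: "graph1 \<Rightarrow> graph1 \<Rightarrow> bool" where
  "iso1 g g' \<longleftrightarrow> (\<exists>fV fH. bij_betw fV (V1 g) (V1 g') \<and> bij_betw fH (H1 g) (H1 g')
     \<and> (\<forall>h\<in>H1 g. fV (nu1 g h) = nu1 g' (fH h) \<and> fH (iota1 g h) = iota1 g' (fH h)))"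

text \<open>Unlabelled 1-graphs = isomorphism classes of (well-formed) 1-graphs.\<close>
definition ucls1 :: "graph1 \<Rightarrow> graph1 set" where
  "ucls1 g = {g'. wf1 g' \<and> iso1 g g'}"

definition UG1 :: "graph1 set set" where
  "UG1 = {ucls1 g | g. wf1 g}"

record graph2 =
  V :: "nat set"
  H :: "nat set"
  S :: "nat set"
  nu :: "nat \<Rightarrow> nat"
  iota :: "nat \<Rightarrow> nat"
  mu :: "nat \<Rightarrow> nat"
  sig1 :: "nat \<Rightarrow> nat"
  sig2 :: "nat \<Rightarrow> nat"

definition wf2 :: "graph2 \<Rightarrow> bool" where
  "wf2 G \<longleftrightarrow> finite (V G) \<and> finite (H G) \<and> finite (S G)
     \<and> (\<forall>h\<in>H G. nu G h \<in> V G)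
     \<and> (\<forall>h\<in>H G. iota G h \<in> H G \<and> iota G (iota G h) = h)
     \<and> (\<forall>s\<in>S G. mu G s \<in> H G)
     \<and> (\<forall>s\<in>S G. sig1 G s \<in> S G \<and> sig1 G (sig1 G s) = s \<and> sig1 G s \<noteq> s
                  \<and> nu G (mu G (sig1 G s)) = nu G (mu G s))
     \<and> (\<forall>s\<in>S G. sig2 G s \<in> S G \<and> sig2 G (sig2 G s) = s
                  \<and> iota G (mu G s) = mu G (sig2 G s)
                  \<and> (sig2 G s = s \<longleftrightarrow> iota G (mu G s) = mu G s))"

definition iso2 :: "graph2 \<Rightarrow> graph2 \<Rightarrow> bool" where
  "iso2 G G' \<longleftrightarrow> (\<exists>fV fH fS. bij_betw fV (V G) (V G') \<and> bij_betw fH (H G) (H G')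
     \<and> bij_betw fS (S G) (S G')
     \<and> (\<forall>h\<in>H G. fV (nu G h) = nu G' (fH h) \<and> fH (iota G h) = iota G' (fH h))
     \<and> (\<forall>s\<in>S G. fH (mu G s) = mu G' (fS s) \<and> fS (sig1 G s) = sig1 G' (fS s)
                  \<and> fS (sig2 G s) = sig2 G' (fS s)))"

definition ucls :: "graph2 \<Rightarrow> graph2 set" where
  "ucls G = {G'. wf2 G' \<and> iso2 G G'}"

definition UG2 :: "graph2 set set" where
  "UG2 = {ucls G | G. wf2 G}"

definition rep :: "graph2 set \<Rightarrow> graph2" where
  "rep x = (SOME G. G \<in> x)"

definition vgraph :: "graph2 \<Rightarrow> nat \<Rightarrow> graph1" where
  "vgraph G v = \<lparr> V1 = {h\<in>H G. nu G h = v}, H1 = {s\<in>S G. nu G (mu G s) = v},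
                  nu1 = mu G, iota1 = sig1 G \<rparr>"

definition edges :: "graph2 \<Rightarrow> nat set set" where
  "edges G = {{h, iota G h} | h. h \<in> H G \<and> iota G h \<noteq> h}"

text \<open>The subgraph of G keeping exactly the edges in F (and the corresponding edge
  strands); removed half-edges / strand sections become external.\<close>
definition subg :: "graph2 \<Rightarrow> nat set set \<Rightarrow> graph2" where
  "subg G F = G\<lparr> iota := (\<lambda>h. if h \<in> \<Union>F then iota G h else h),
                 sig2 := (\<lambda>s. if mu G s \<in> \<Union>F then sig2 G s else s) \<rparr>"

definition adj :: "graph2 \<Rightarrow> (nat \<times> nat) set" where
  "adj G = {(nu G h, nu G (iota G h)) | h. h \<in> H G \<and> iota G h \<noteq> h}"

definition comp :: "graph2 \<Rightarrow> nat \<Rightarrow> nat set" where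
  "comp G v = {w \<in> V G. (v, w) \<in> (adj G)\<^sup>*}"

definition comps :: "graph2 \<Rightarrow> nat set set" where
  "comps G = comp G ` V G"

text \<open>External faces of a 2-graph K, as lists [s_1,...,s_2n] (0-indexed here).\<close>
definition ext_face :: "graph2 \<Rightarrow> nat list \<Rightarrow> bool" where
  "ext_face K xs \<longleftrightarrow> xs \<noteq> [] \<and> even (length xs) \<and> distinct xs \<and> set xs \<subseteq> S K
     \<and> (\<forall>i. 2*i+1 < length xs \<longrightarrow> xs ! (2*i+1) = sig1 K (xs ! (2*i)))
     \<and> (\<forall>i. 2*i+2 < length xs \<longrightarrow> xs ! (2*i+2) = sig2 K (xs ! (2*i+1)))
     \<and> sig2 K (hd xs) = hd xs \<and> sig2 K (last xs) = last xs"

text \<open>Contraction G/K where K = subg G F. A vertex of G/K (a connected component of K)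
  is labelled by the minimal vertex label it contains.\<close>
definition contr :: "graph2 \<Rightarrow> nat set set \<Rightarrow> graph2" where
  "contr G F = (let K = subg G F in
     \<lparr> V = Min ` comps K,
       H = {h \<in> H G. iota K h = h},
       S = {s \<in> S G. sig2 K s = s},
       nu = (\<lambda>h. Min (comp K (nu G h))),
       iota = iota G,
       mu = mu G,
       sig1 = (\<lambda>s. THE t. \<exists>xs. ext_face K xs \<and> hd xs = s \<and> last xs = t),
       sig2 = sig2 G \<rparr>)"

definition mix :: "(nat \<Rightarrow> nat) \<Rightarrow> (nat \<Rightarrow> nat) \<Rightarrow> nat \<Rightarrow> nat" where
  "mix f g n = (if even n then 2 * f (n div 2) else 2 * g (n div 2) + 1)"

definition dlab :: "nat set \<Rightarrow> nat set \<Rightarrow> nat set" where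
  "dlab A B = (\<lambda>n. 2*n) ` A \<union> (\<lambda>n. 2*n+1) ` B"

definition du :: "graph2 \<Rightarrow> graph2 \<Rightarrow> graph2" where
  "du G G' = \<lparr> V = dlab (V G) (V G'), H = dlab (H G) (H G'), S = dlab (S G) (S G'),
     nu = mix (nu G) (nu G'), iota = mix (iota G) (iota G'), mu = mix (mu G) (mu G'),
     sig1 = mix (sig1 G) (sig1 G'), sig2 = mix (sig2 G) (sig2 G') \<rparr>"

definition empty2 :: graph2 where
  "empty2 = \<lparr> V = {}, H = {}, S = {}, nu = id, iota = id, mu = id, sig1 = id, sig2 = id \<rparr>"

text \<open>Elements of the Q-vector space with basis UG2: finitely supported coefficient
  functions; G \<otimes> G is identified with finitely supported functions on pairs of basis
  elements (the free vector space on UG2 \<times> UG2).\<close>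
type_synonym elt = "graph2 set \<Rightarrow> rat"
type_synonym elt2 = "graph2 set \<times> graph2 set \<Rightarrow> rat"

definition supp :: "('a \<Rightarrow> rat) \<Rightarrow> 'a set" where
  "supp a = {x. a x \<noteq> 0}"

definition algG :: "elt set" where
  "algG = {a. finite (supp a) \<and> supp a \<subseteq> UG2}"

definition gbasis :: "graph2 set \<Rightarrow> elt" where
  "gbasis x = (\<lambda>z. if z = x then 1 else 0)"

definition gunit :: elt where
  "gunit = gbasis (ucls empty2)"

definition gmult :: "elt \<Rightarrow> elt \<Rightarrow> elt" where
  "gmult a b = (\<lambda>z. \<Sum>(x, y) \<in> supp a \<times> supp b.
       if ucls (du (rep x) (rep y)) = z then a x * b y else 0)"

definition coprod_basis :: "graph2 set \<Rightarrow> elt2" where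
  "coprod_basis x = (\<lambda>(p, q). of_nat (card {F. F \<subseteq> edges (rep x)
       \<and> ucls (subg (rep x) F) = p \<and> ucls (contr (rep x) F) = q}))"

definition gcoprod :: "elt \<Rightarrow> elt2" where
  "gcoprod a = (\<lambda>pq. \<Sum>x \<in> supp a. a x * coprod_basis x pq)"

definition gtensor :: "elt \<Rightarrow> elt \<Rightarrow> elt2" where
  "gtensor a b = (\<lambda>(p, q). a p * b q)"

inductive_set qspan :: "('a \<Rightarrow> rat) set \<Rightarrow> ('a \<Rightarrow> rat) set" for T where
  zero: "(\<lambda>_. 0) \<in> qspan T"
| step: "u \<in> qspan T \<Longrightarrow> t \<in> T \<Longrightarrow> (\<lambda>z. u z + c * t z) \<in> qspan T"

inductive_set gen_alg :: "graph2 set set \<Rightarrow> elt set" for X where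
  gen: "x \<in> X \<Longrightarrow> gbasis x \<in> gen_alg X"
| unit: "gunit \<in> gen_alg X"
| zero: "(\<lambda>_. 0) \<in> gen_alg X"
| add: "a \<in> gen_alg X \<Longrightarrow> b \<in> gen_alg X \<Longrightarrow> (\<lambda>z. a z + b z) \<in> gen_alg X"
| smult: "a \<in> gen_alg X \<Longrightarrow> (\<lambda>z. c * a z) \<in> gen_alg X"
| mult: "a \<in> gen_alg X \<Longrightarrow> b \<in> gen_alg X \<Longrightarrow> gmult a b \<in> gen_alg X"

definition is_subalgebra :: "elt set \<Rightarrow> bool" where
  "is_subalgebra B \<longleftrightarrow> B \<subseteq> algG \<and> gunit \<in> B \<and> (\<lambda>_. 0) \<in> B
     \<and> (\<forall>a\<in>B. \<forall>b\<in>B. (\<lambda>z. a z + b z) \<in> B)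
     \<and> (\<forall>a\<in>B. \<forall>c. (\<lambda>z. c * a z) \<in> B)
     \<and> (\<forall>a\<in>B. \<forall>b\<in>B. gmult a b \<in> B)"

text \<open>Subbialgebra: a subalgebra B with \<Delta>(B) \<subseteq> B \<otimes> B (the counit restricts automatically).\<close>
definition is_subbialgebra :: "elt set \<Rightarrow> bool" where
  "is_subbialgebra B \<longleftrightarrow> is_subalgebra B
     \<and> (\<forall>a\<in>B. gcoprod a \<in> qspan (case_prod gtensor ` (B \<times> B)))"

definition G2 :: "graph1 set set \<Rightarrow> graph2 set set" where
  "G2 VV = {ucls G | G. wf2 G \<and> (\<forall>v\<in>V G. ucls1 (vgraph G v) \<in> VV)}"

definition cclosure :: "graph1 set set \<Rightarrow> graph2 set set" where
  "cclosure VV = {ucls (contr G F) | G F. wf2 G \<and> ucls G \<in> G2 VV \<and> F \<subseteq> edges G}"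

end

theory Submission
  imports Defs
begin


lemma iso2_refl: "iso2 G G"
  unfolding iso2_def by (rule exI[of _ id], rule exI[of _ id], rule exI[of _ id]) auto

lemma iso2_sym: assumes "iso2 G G'" "wf2 G" shows "iso2 G' G"
proof -
  obtain fV fH fS where bV: "bij_betw fV (V G) (V G')" and bH: "bij_betw fH (H G) (H G')"
    and bS: "bij_betw fS (S G) (S G')"
    and h: "\<forall>h\<in>H G. fV (nu G h) = nu G' (fH h) \<and> fH (iota G h) = iota G' (fH h)"
    and s: "\<forall>s\<in>S G. fH (mu G s) = mu G' (fS s) \<and> fS (sig1 G s) = sig1 G' (fS s)
                  \<and> fS (sig2 G s) = sig2 G' (fS s)"
    using assms unfolding iso2_def by blast
  define gV where "gV = the_inv_into (V G) fV"
  define gH where "gH = the_inv_into (H G) fH"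
  define gS where "gS = the_inv_into (S G) fS"
  have bV': "bij_betw gV (V G') (V G)" unfolding gV_def by (rule bij_betw_the_inv_into[OF bV])
  have bH': "bij_betw gH (H G') (H G)" unfolding gH_def by (rule bij_betw_the_inv_into[OF bH])
  have bS': "bij_betw gS (S G') (S G)" unfolding gS_def by (rule bij_betw_the_inv_into[OF bS])
  have fgH: "\<And>x. x \<in> H G' \<Longrightarrow> fH (gH x) = x \<and> gH x \<in> H G"
    using bH bH' unfolding gH_def by (meson bij_betw_apply f_the_inv_into_f_bij_betw)
  have fgS: "\<And>x. x \<in> S G' \<Longrightarrow> fS (gS x) = x \<and> gS x \<in> S G"
    using bS bS' unfolding gS_def by (meson bij_betw_apply f_the_inv_into_f_bij_betw)
  have gfV: "\<And>x. x \<in> V G \<Longrightarrow> gV (fV x) = x"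
    using bV unfolding gV_def by (simp add: bij_betw_def the_inv_into_f_f)
  have gfH: "\<And>x. x \<in> H G \<Longrightarrow> gH (fH x) = x"
    using bH unfolding gH_def by (simp add: bij_betw_def the_inv_into_f_f)
  have gfS: "\<And>x. x \<in> S G \<Longrightarrow> gS (fS x) = x"
    using bS unfolding gS_def by (simp add: bij_betw_def the_inv_into_f_f)
  show ?thesis unfolding iso2_def
  proof (intro exI conjI ballI)
    show "bij_betw gV (V G') (V G)" "bij_betw gH (H G') (H G)" "bij_betw gS (S G') (S G)"
      by fact+
  next
    fix x assume x: "x \<in> H G'"
    obtain h where hx: "h \<in> H G" "x = fH h" using fgH[OF x] by force
    show "gV (nu G' x) = nu G (gH x)" using h hx gfH gfV assms(2) unfolding wf2_def
      by metis
  next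
    fix x assume x: "x \<in> H G'"
    obtain h where hx: "h \<in> H G" "x = fH h" using fgH[OF x] by force
    show "gH (iota G' x) = iota G (gH x)" using h hx gfH assms(2) unfolding wf2_def
      by metis
  next
    fix x assume x: "x \<in> S G'"
    obtain h where hx: "h \<in> S G" "x = fS h" using fgS[OF x] by force
    show "gH (mu G' x) = mu G (gS x)" using s hx gfH gfS assms(2) unfolding wf2_def by metis
  next
    fix x assume x: "x \<in> S G'"
    obtain h where hx: "h \<in> S G" "x = fS h" using fgS[OF x] by force
    show "gS (sig1 G' x) = sig1 G (gS x)" using s hx gfS assms(2) unfolding wf2_def by metis
  next
    fix x assume x: "x \<in> S G'"
    obtain h where hx: "h \<in> S G" "x = fS h" using fgS[OF x] by force
    show "gS (sig2 G' x) = sig2 G (gS x)" using s hx gfS assms(2) unfolding wf2_def by metis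
  qed
qed

lemma iso2_trans: assumes "iso2 GA GB" "iso2 GB GC" shows "iso2 GA GC"
proof -
  obtain fV fH fS where bV: "bij_betw fV (V GA) (V GB)" and bH: "bij_betw fH (H GA) (H GB)"
    and bS: "bij_betw fS (S GA) (S GB)"
    and h: "\<forall>h\<in>H GA. fV (nu GA h) = nu GB (fH h) \<and> fH (iota GA h) = iota GB (fH h)"
    and s: "\<forall>s\<in>S GA. fH (mu GA s) = mu GB (fS s) \<and> fS (sig1 GA s) = sig1 GB (fS s)
                  \<and> fS (sig2 GA s) = sig2 GB (fS s)"
    using assms(1) unfolding iso2_def by blast
  obtain gV gH gS where bV': "bij_betw gV (V GB) (V GC)" and bH': "bij_betw gH (H GB) (H GC)"
    and bS': "bij_betw gS (S GB) (S GC)"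
    and h': "\<forall>h\<in>H GB. gV (nu GB h) = nu GC (gH h) \<and> gH (iota GB h) = iota GC (gH h)"
    and s': "\<forall>s\<in>S GB. gH (mu GB s) = mu GC (gS s) \<and> gS (sig1 GB s) = sig1 GC (gS s)
                  \<and> gS (sig2 GB s) = sig2 GC (gS s)"
    using assms(2) unfolding iso2_def by blast
  show ?thesis unfolding iso2_def
    apply (rule exI[of _ "gV o fV"], rule exI[of _ "gH o fH"], rule exI[of _ "gS o fS"])
    using bV bH bS bV' bH' bS' h s h' s'
    by (auto intro: bij_betw_trans dest: bij_betw_apply)
qed

lemma iso1_refl: "iso1 g g"
  unfolding iso1_def by (rule exI[of _ id], rule exI[of _ id]) auto

lemma iso1_sym: assumes "iso1 G G'" "wf1 G" shows "iso1 G' G"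
proof -
  obtain fV fH where bV: "bij_betw fV (V1 G) (V1 G')" and bH: "bij_betw fH (H1 G) (H1 G')"
    and h: "\<forall>h\<in>H1 G. fV (nu1 G h) = nu1 G' (fH h) \<and> fH (iota1 G h) = iota1 G' (fH h)"
    using assms unfolding iso1_def by blast
  define gV where "gV = the_inv_into (V1 G) fV"
  define gH where "gH = the_inv_into (H1 G) fH"
  have bV': "bij_betw gV (V1 G') (V1 G)" unfolding gV_def by (rule bij_betw_the_inv_into[OF bV])
  have bH': "bij_betw gH (H1 G') (H1 G)" unfolding gH_def by (rule bij_betw_the_inv_into[OF bH])
  have fgH: "\<And>x. x \<in> H1 G' \<Longrightarrow> fH (gH x) = x \<and> gH x \<in> H1 G"
    using bH bH' unfolding gH_def by (meson bij_betw_apply f_the_inv_into_f_bij_betw)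
  have gfV: "\<And>x. x \<in> V1 G \<Longrightarrow> gV (fV x) = x"
    using bV unfolding gV_def by (simp add: bij_betw_def the_inv_into_f_f)
  have gfH: "\<And>x. x \<in> H1 G \<Longrightarrow> gH (fH x) = x"
    using bH unfolding gH_def by (simp add: bij_betw_def the_inv_into_f_f)
  have wfnu: "\<forall>h\<in>H1 G. nu1 G h \<in> V1 G \<or> True" by simp
  show ?thesis unfolding iso1_def
  proof (intro exI conjI ballI)
    show "bij_betw gV (V1 G') (V1 G)" "bij_betw gH (H1 G') (H1 G)" by fact+
  next
    fix x assume x: "x \<in> H1 G'"
    obtain hh where hx: "hh \<in> H1 G" "x = fH hh" using fgH[OF x] by force
    show "gV (nu1 G' x) = nu1 G (gH x)" using h hx gfH gfV assms(2) unfolding wf1_def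
      by metis
  next
    fix x assume x: "x \<in> H1 G'"
    obtain hh where hx: "hh \<in> H1 G" "x = fH hh" using fgH[OF x] by force
    show "gH (iota1 G' x) = iota1 G (gH x)" using h hx gfH assms(2) unfolding wf1_def
      by metis
  qed
qed

lemma iso1_trans: assumes "iso1 GA GB" "iso1 GB GC" shows "iso1 GA GC"
proof -
  obtain fV fH where bV: "bij_betw fV (V1 GA) (V1 GB)" and bH: "bij_betw fH (H1 GA) (H1 GB)"
    and h: "\<forall>h\<in>H1 GA. fV (nu1 GA h) = nu1 GB (fH h) \<and> fH (iota1 GA h) = iota1 GB (fH h)"
    using assms(1) unfolding iso1_def by blast
  obtain gV gH where bV': "bij_betw gV (V1 GB) (V1 GC)" and bH': "bij_betw gH (H1 GB) (H1 GC)"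
    and h': "\<forall>h\<in>H1 GB. gV (nu1 GB h) = nu1 GC (gH h) \<and> gH (iota1 GB h) = iota1 GC (gH h)"
    using assms(2) unfolding iso1_def by blast
  show ?thesis unfolding iso1_def
    apply (rule exI[of _ "gV o fV"], rule exI[of _ "gH o fH"])
    using bV bH bV' bH' h h'
    by (auto intro: bij_betw_trans dest: bij_betw_apply)
qed

lemma ucls_eq_iff: assumes "wf2 G" "wf2 G'" shows "ucls G = ucls G' \<longleftrightarrow> iso2 G G'"
proof
  assume "ucls G = ucls G'"
  then have "G' \<in> ucls G" using assms iso2_refl unfolding ucls_def by blast
  then show "iso2 G G'" unfolding ucls_def by blast
next
  assume i: "iso2 G G'"
  show "ucls G = ucls G'" unfolding ucls_def
    using i iso2_sym[OF i assms(1)] iso2_trans by blast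
qed

lemma ucls1_eq: assumes "wf1 G" "iso1 G G'" shows "ucls1 G = ucls1 G'"
  unfolding ucls1_def using iso1_sym[OF assms(2) assms(1)] assms(2) iso1_trans by blast



definition invK :: "graph2 \<Rightarrow> bool" where
  "invK K \<longleftrightarrow> finite (S K) \<and> (\<forall>x\<in>S K. sig1 K x \<in> S K \<and> sig1 K (sig1 K x) = x \<and> sig1 K x \<noteq> x
      \<and> sig2 K x \<in> S K \<and> sig2 K (sig2 K x) = x)"

definition fR :: "graph2 \<Rightarrow> (nat \<times> nat) set" where
  "fR K = {(x, sig1 K x) | x. x \<in> S K} \<union> {(x, sig2 K x) | x. x \<in> S K}"

fun walk :: "graph2 \<Rightarrow> nat \<Rightarrow> nat \<Rightarrow> nat" where
  "walk K s 0 = s"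
| "walk K s (Suc n) = (if even n then sig1 K (walk K s n) else sig2 K (walk K s n))"

lemma walk_in: "invK K \<Longrightarrow> s \<in> S K \<Longrightarrow> walk K s n \<in> S K"
  by (induction n) (auto simp: invK_def)

lemma walk_back1: "invK K \<Longrightarrow> s \<in> S K \<Longrightarrow> even n \<Longrightarrow> sig1 K (walk K s (Suc n)) = walk K s n"
  using walk_in[of K s n] by (auto simp: invK_def)

lemma walk_back2: "invK K \<Longrightarrow> s \<in> S K \<Longrightarrow> odd n \<Longrightarrow> sig2 K (walk K s (Suc n)) = walk K s n"
  using walk_in[of K s n] by (auto simp: invK_def)

lemma walk_cancel: "invK K \<Longrightarrow> s \<in> S K \<Longrightarrow> even m = even n \<Longrightarrow> walk K s (Suc m) = walk K s (Suc n)
   \<Longrightarrow> walk K s m = walk K s n"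
  by (metis walk_back1 walk_back2)

lemma walk_reach: "invK K \<Longrightarrow> s \<in> S K \<Longrightarrow> (s, walk K s n) \<in> (fR K)\<^sup>*"
proof (induction n)
  case 0 then show ?case by simp
next
  case (Suc n)
  have "(walk K s n, walk K s (Suc n)) \<in> fR K"
    using walk_in[OF Suc.prems, of n] by (auto simp: fR_def)
  then show ?case using Suc by (meson rtrancl.rtrancl_into_rtrancl)
qed

lemma walk_inj_aux:
  assumes K: "invK K" and s: "s \<in> S K" "sig2 K s = s"
    and N: "\<forall>k<N. odd k \<longrightarrow> sig2 K (walk K s k) \<noteq> walk K s k"
  shows "\<forall>i. i + d \<le> N \<longrightarrow> 0 < d \<longrightarrow> walk K s i \<noteq> walk K s (i + d)"
proof -
  define w where "w = walk K s"
  have w0: "w 0 = s" unfolding w_def by simp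
  have wS1: "\<And>n. even n \<Longrightarrow> w (Suc n) = sig1 K (w n)" unfolding w_def by simp
  have wS2: "\<And>n. odd n \<Longrightarrow> w (Suc n) = sig2 K (w n)" unfolding w_def by simp
  have wB1: "\<And>n. even n \<Longrightarrow> sig1 K (w (Suc n)) = w n" unfolding w_def using walk_back1[OF K s(1)] by blast
  have wB2: "\<And>n. odd n \<Longrightarrow> sig2 K (w (Suc n)) = w n" unfolding w_def using walk_back2[OF K s(1)] by blast
  have wc: "\<And>m n. even m = even n \<Longrightarrow> w (Suc m) = w (Suc n) \<Longrightarrow> w m = w n"
    unfolding w_def using walk_cancel[OF K s(1)] by blast
  have win: "\<And>n. w n \<in> S K" unfolding w_def using walk_in[OF K s(1)] .
  have a: "\<And>x. x \<in> S K \<Longrightarrow> sig1 K x \<noteq> x" using K by (auto simp: invK_def)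
  have b: "\<And>x. x \<in> S K \<Longrightarrow> sig2 K (sig2 K x) = x" using K by (auto simp: invK_def)
  have N': "\<And>k. k < N \<Longrightarrow> odd k \<Longrightarrow> sig2 K (w k) \<noteq> w k" using N unfolding w_def by blast
  have "\<forall>i. i + d \<le> N \<longrightarrow> 0 < d \<longrightarrow> w i \<noteq> w (i + d)"
  proof (induction d rule: less_induct)
    case (less d)
    show ?case
    proof (intro allI)
      fix i show "i + d \<le> N \<longrightarrow> 0 < d \<longrightarrow> w i \<noteq> w (i + d)"
      proof (induction i)
        case 0
        show ?case
        proof (intro impI notI)
          assume d: "0 + d \<le> N" "0 < d" and eq: "w 0 = w (0 + d)"
          have eq': "s = w d" using eq w0 by simp
          show False
          proof (cases "even d")
            case True
            have "d \<ge> 2" using True d(2) by presburger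
            define m where "m = d - 2"
            have m: "d = Suc (Suc m)" using \<open>d \<ge> 2\<close> unfolding m_def by simp
            have "odd (Suc m)" using True m by simp
            then have "sig2 K (w (Suc (Suc m))) = w (Suc m)" by (rule wB2)
            then have "w (Suc m) = w 0" using eq' m s(2) w0 by simp
            moreover have "w 0 \<noteq> w (0 + Suc m)"
              using less.IH[of "Suc m", rule_format, of 0] m d by simp
            ultimately show False by simp
          next
            case False
            then show False
            proof (cases "d = 1")
              case True
              have "w 1 = sig1 K (w 0)" using wS1[of 0] by simp
              then show False using eq' True a[OF s(1)] w0 by simp
            next
              case False
              have "d \<ge> 3" using False d(2) \<open>odd d\<close> by presburger
              define m where "m = d - 2"
              have m: "d = Suc (Suc m)" "0 < m" using \<open>d \<ge> 3\<close> unfolding m_def by simp_all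
              have "even (Suc m)" using \<open>odd d\<close> m by simp
              then have "sig1 K (w (Suc (Suc m))) = w (Suc m)" by (rule wB1)
              then have "w (Suc m) = sig1 K s" using eq' m by simp
              then have "w 1 = w (1 + m)" using wS1[of 0] w0 by simp
              moreover have "w 1 \<noteq> w (1 + m)"
                using less.IH[of m, rule_format, of 1] m d by simp
              ultimately show False by blast
            qed
          qed
        qed
      next
        case (Suc i)
        show ?case
        proof (intro impI notI)
          assume d: "Suc i + d \<le> N" "0 < d" and eq: "w (Suc i) = w (Suc i + d)"
          show False
          proof (cases "even d")
            case True
            have "w i = w (i + d)"
              using wc[of i "i + d"] eq True by simp
            then show False using Suc.IH d by simp
          next
            case False
            show False
            proof (cases "d = 1")
              case True
              then have e2: "w (Suc (Suc i)) = w (Suc i)" using eq by simp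
              then show False
              proof (cases "even (Suc i)")
                case True
                then show False using e2 wS1[OF True] a[OF win[of "Suc i"]] by simp
              next
                case False
                then show False using e2 wS2[OF False] N'[of "Suc i"] d \<open>d = 1\<close> by auto
              qed
            next
              case False
              have "d \<ge> 3" using False d(2) \<open>odd d\<close> by presburger
              define m where "m = d - 2"
              have m: "d = Suc (Suc m)" "0 < m" using \<open>d \<ge> 3\<close> unfolding m_def by simp_all
              have par: "even (Suc i + Suc m) \<longleftrightarrow> even (Suc i)" using \<open>odd d\<close> m by simp
              have e1: "Suc i + d = Suc (Suc i + Suc m)" using m by simp
              have "w (Suc (Suc i)) = w (Suc i + Suc m)"
              proof (cases "even (Suc i)")
                case True
                have "w (Suc (Suc i)) = sig1 K (w (Suc i))" using True by (rule wS1)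
                moreover have "w (Suc i + Suc m) = sig1 K (w (Suc i + d))"
                  using wB1[of "Suc i + Suc m"] True par e1 by simp
                ultimately show ?thesis using eq by simp
              next
                case False
                have "w (Suc (Suc i)) = sig2 K (w (Suc i))" using False by (rule wS2)
                moreover have "w (Suc i + Suc m) = sig2 K (w (Suc i + d))"
                  using wB2[of "Suc i + Suc m"] False par e1 by simp
                ultimately show ?thesis using eq by simp
              qed
              then have "w (Suc (Suc i)) = w (Suc (Suc i) + m)" by simp
              moreover have "w (Suc (Suc i)) \<noteq> w (Suc (Suc i) + m)"
                using less.IH[of m, rule_format, of "Suc (Suc i)"] m d by simp
              ultimately show False by blast
            qed
          qed
        qed
      qed
    qed
  qed
  then show ?thesis unfolding w_def .
qed

lemma walk_inj:
  assumes K: "invK K" and s: "s \<in> S K" "sig2 K s = s"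
    and N: "\<forall>k<N. odd k \<longrightarrow> sig2 K (walk K s k) \<noteq> walk K s k"
  shows "inj_on (walk K s) {0..N}"
proof (rule inj_onI)
  fix i j assume ij: "i \<in> {0..N}" "j \<in> {0..N}" "walk K s i = walk K s j"
  show "i = j"
  proof (rule ccontr)
    assume "i \<noteq> j"
    then show False
      using walk_inj_aux[OF K s N, rule_format, of "min i j" "max i j - min i j"] ij
      by (cases "i < j") (auto simp: min_def max_def)
  qed
qed

lemma walk_stop:
  assumes K: "invK K" and s: "s \<in> S K" "sig2 K s = s"
  shows "\<exists>N. odd N \<and> sig2 K (walk K s N) = walk K s N"
proof (rule ccontr)
  assume "\<not> ?thesis"
  then have "\<forall>k<card (S K). odd k \<longrightarrow> sig2 K (walk K s k) \<noteq> walk K s k" by blast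
  from walk_inj[OF K s this] have inj: "inj_on (walk K s) {0..card (S K)}" .
  have sub: "walk K s ` {0..card (S K)} \<subseteq> S K" using walk_in[OF K s(1)] by blast
  have fin: "finite (S K)" using K by (simp add: invK_def)
  from card_inj_on_le[OF inj sub fin] show False by simp
qed

definition stopN :: "graph2 \<Rightarrow> nat \<Rightarrow> nat" where
  "stopN K s = (LEAST N. odd N \<and> sig2 K (walk K s N) = walk K s N)"

lemma stopN:
  assumes K: "invK K" and s: "s \<in> S K" "sig2 K s = s"
  shows "odd (stopN K s)" "sig2 K (walk K s (stopN K s)) = walk K s (stopN K s)"
    "\<forall>k<stopN K s. odd k \<longrightarrow> sig2 K (walk K s k) \<noteq> walk K s k"
proof -
  obtain N where N: "odd N \<and> sig2 K (walk K s N) = walk K s N" using walk_stop[OF K s] by blast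
  show "odd (stopN K s)" "sig2 K (walk K s (stopN K s)) = walk K s (stopN K s)"
    unfolding stopN_def using LeastI[of "\<lambda>N. odd N \<and> sig2 K (walk K s N) = walk K s N", OF N] by auto
  show "\<forall>k<stopN K s. odd k \<longrightarrow> sig2 K (walk K s k) \<noteq> walk K s k"
    unfolding stopN_def using not_less_Least by blast
qed

lemma walk_injN:
  assumes K: "invK K" and s: "s \<in> S K" "sig2 K s = s"
  shows "inj_on (walk K s) {0..stopN K s}"
  using walk_inj[OF K s stopN(3)[OF K s]] .

lemma face_exists:
  assumes K: "invK K" and s: "s \<in> S K" "sig2 K s = s"
  shows "ext_face K (map (walk K s) [0..<Suc (stopN K s)])"
proof -
  let ?N = "stopN K s"
  let ?xs = "map (walk K s) [0..<Suc ?N]"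
  have len: "length ?xs = Suc ?N" by simp
  have st: "set [0..<Suc ?N] = {0..?N}" by auto
  have "distinct ?xs"
    using walk_injN[OF K s] by (simp only: distinct_map st distinct_upt)
  moreover have "set ?xs \<subseteq> S K" using walk_in[OF K s(1)] by auto
  moreover have "even (length ?xs)" using stopN(1)[OF K s] by simp
  moreover have "\<forall>i. 2*i+1 < length ?xs \<longrightarrow> ?xs ! (2*i+1) = sig1 K (?xs ! (2*i))"
    by (simp del: upt_Suc)
  moreover have "\<forall>i. 2*i+2 < length ?xs \<longrightarrow> ?xs ! (2*i+2) = sig2 K (?xs ! (2*i+1))"
  proof (intro allI impI)
    fix i assume "2*i+2 < length ?xs"
    then have "?xs ! (2*i+2) = walk K s (Suc (2*i+1))" "?xs ! (2*i+1) = walk K s (2*i+1)"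
      by (simp_all del: upt_Suc walk.simps)
    then show "?xs ! (2*i+2) = sig2 K (?xs ! (2*i+1))" by simp
  qed
  moreover have "sig2 K (hd ?xs) = hd ?xs" using s by (simp del: upt_Suc add: hd_map)
  moreover have "sig2 K (last ?xs) = last ?xs" using stopN(2)[OF K s] by (simp add: last_map del: upt_Suc)
  ultimately show ?thesis unfolding ext_face_def by (simp del: upt_Suc)
qed

lemma walk_closed:
  assumes K: "invK K" and s: "s \<in> S K" "sig2 K s = s" and x: "x \<in> walk K s ` {0..stopN K s}"
  shows "sig1 K x \<in> walk K s ` {0..stopN K s}" "sig2 K x \<in> walk K s ` {0..stopN K s}"
proof -
  let ?N = "stopN K s"
  obtain k where k: "k \<le> ?N" "x = walk K s k" using x by auto
  have oN: "odd ?N" using stopN(1)[OF K s] .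
  show "sig1 K x \<in> walk K s ` {0..?N}"
  proof (cases "even k")
    case True
    then have "k \<noteq> ?N" using oN by auto
    then have "k < ?N" using k by simp
    then have "Suc k \<in> {0..?N}" by simp
    moreover have "walk K s (Suc k) = sig1 K x" using True k by simp
    ultimately show ?thesis by (metis image_eqI)
  next
    case False
    define j where "j = k - 1"
    have j: "k = Suc j" "even j" using False unfolding j_def by (cases k; simp)+
    have "sig1 K x = walk K s j" using walk_back1[OF K s(1) j(2)] j k by simp
    then show ?thesis using j k by auto
  qed
  show "sig2 K x \<in> walk K s ` {0..?N}"
  proof (cases "even k")
    case False
    show ?thesis
    proof (cases "k = ?N")
      case True
      then show ?thesis using stopN(2)[OF K s] k by auto
    next
      case ne: False
      then have "Suc k \<in> {0..?N}" using k by simp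
      moreover have "walk K s (Suc k) = sig2 K x" using False k by simp
      ultimately show ?thesis by (metis image_eqI)
    qed
  next
    case True
    show ?thesis
    proof (cases "k = 0")
      case True
      have "s \<in> walk K s ` {0..?N}" using image_eqI[of s "walk K s" 0 "{0..?N}"] by simp
      then show ?thesis using True s k by simp
    next
      case False
      define j where "j = k - 1"
      have j: "k = Suc j" "odd j" using False \<open>even k\<close> unfolding j_def by (cases k; simp)+
      have "sig2 K x = walk K s j" using walk_back2[OF K s(1) j(2)] j k by simp
      then show ?thesis using j k by auto
    qed
  qed
qed

lemma reach_in_walk:
  assumes K: "invK K" and s: "s \<in> S K" "sig2 K s = s" and r: "(s, t) \<in> (fR K)\<^sup>*"
  shows "t \<in> walk K s ` {0..stopN K s}"
  using r
proof (induction rule: rtrancl_induct)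
  case base
  show ?case using image_eqI[of s "walk K s" 0 "{0..stopN K s}"] by simp
next
  case (step y z)
  then show ?case using walk_closed[OF K s step.IH] by (auto simp: fR_def)
qed

definition faceP :: "graph2 \<Rightarrow> nat \<Rightarrow> nat \<Rightarrow> bool" where
  "faceP K s t \<longleftrightarrow> t \<in> S K \<and> t \<noteq> s \<and> sig2 K t = t \<and> (s, t) \<in> (fR K)\<^sup>*"

lemma faceP_walk:
  assumes K: "invK K" and s: "s \<in> S K" "sig2 K s = s" and P: "faceP K s t"
  shows "t = walk K s (stopN K s)"
proof -
  let ?N = "stopN K s"
  have "t \<in> walk K s ` {0..?N}"
    using reach_in_walk[OF K s] P unfolding faceP_def by blast
  then obtain k where k: "k \<le> ?N" "t = walk K s k" by auto
  have inj: "inj_on (walk K s) {0..?N}" using walk_injN[OF K s] .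
  have oN: "odd ?N" using stopN(1)[OF K s] .
  have fx: "sig2 K t = t" "t \<noteq> s" using P unfolding faceP_def by auto
  show ?thesis
  proof (cases "k = ?N")
    case True then show ?thesis using k by simp
  next
    case False
    then have kN: "k < ?N" using k by simp
    show ?thesis
    proof (cases "even k")
      case False
      then show ?thesis using stopN(3)[OF K s] kN fx k by blast
    next
      case True
      show ?thesis
      proof (cases "k = 0")
        case True then show ?thesis using fx k by simp
      next
        case False
        define j where "j = k - 1"
      have j: "k = Suc j" "odd j" using False \<open>even k\<close> unfolding j_def by (cases k; simp)+
        have "walk K s j = sig2 K t" using walk_back2[OF K s(1) j(2)] j k by simp
        then have "walk K s j = walk K s k" using fx k by simp
        moreover have "j \<in> {0..?N}" "k \<in> {0..?N}" using j kN by auto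
        ultimately have "j = k" using inj by (meson inj_onD)
        then show ?thesis using j by simp
      qed
    qed
  qed
qed

lemma faceP_unique:
  assumes K: "invK K" and s: "s \<in> S K" "sig2 K s = s" and "faceP K s t1" "faceP K s t2"
  shows "t1 = t2"
  using faceP_walk[OF K s assms(4)] faceP_walk[OF K s assms(5)] by simp

lemma ext_face_reach:
  assumes K: "invK K" and xs: "ext_face K xs"
  shows "\<forall>k<length xs. (hd xs, xs ! k) \<in> (fR K)\<^sup>*"
proof (intro allI impI)
  fix k assume "k < length xs"
  then show "(hd xs, xs ! k) \<in> (fR K)\<^sup>*"
  proof (induction k)
    case 0 then show ?case using xs by (simp add: ext_face_def hd_conv_nth)
  next
    case (Suc k)
    have kin: "xs ! k \<in> S K" using Suc.prems xs unfolding ext_face_def by (meson Suc_lessD nth_mem subsetD)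
    have "(xs ! k, xs ! Suc k) \<in> fR K"
    proof (cases "even k")
      case True
      then obtain i where "k = 2*i" by blast
      then have "xs ! Suc k = sig1 K (xs ! k)" using xs Suc.prems unfolding ext_face_def by auto
      then show ?thesis using kin by (auto simp: fR_def)
    next
      case False
      then obtain i where i: "k = 2*i+1" by (blast elim: oddE)
      then have "Suc k = 2*i+2" by simp
      then have "xs ! Suc k = sig2 K (xs ! k)" using xs Suc.prems i unfolding ext_face_def
        by simp
      then show ?thesis using kin by (auto simp: fR_def)
    qed
    then show ?case using Suc by (meson Suc_lessD rtrancl.rtrancl_into_rtrancl)
  qed
qed

lemma ext_face_faceP:
  assumes K: "invK K" and xs: "ext_face K xs"
  shows "faceP K (hd xs) (last xs)"
proof -
  have ne: "xs \<noteq> []" and ev: "even (length xs)" and d: "distinct xs" and sub: "set xs \<subseteq> S K"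
    and l: "sig2 K (last xs) = last xs" using xs unfolding ext_face_def by auto
  have "length xs \<noteq> 0" using ne by simp
  then have len: "length xs \<ge> 2" using ev by presburger
  have "last xs = xs ! (length xs - 1)" using ne by (simp add: last_conv_nth)
  moreover have "hd xs = xs ! 0" using ne by (simp add: hd_conv_nth)
  moreover have "xs ! (length xs - 1) \<noteq> xs ! 0" using d len by (subst nth_eq_iff_index_eq) auto
  ultimately have "last xs \<noteq> hd xs" by simp
  moreover have "last xs \<in> S K" using sub ne by auto
  moreover have "(hd xs, last xs) \<in> (fR K)\<^sup>*"
    using ext_face_reach[OF K xs] \<open>last xs = xs ! (length xs - 1)\<close> len by simp
  ultimately show ?thesis using l unfolding faceP_def by simp
qed

definition fend :: "graph2 \<Rightarrow> nat \<Rightarrow> nat" where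
  "fend K s = (THE t. \<exists>xs. ext_face K xs \<and> hd xs = s \<and> last xs = t)"

lemma fend_eq:
  assumes K: "invK K" and s: "s \<in> S K" "sig2 K s = s" and P: "faceP K s t"
  shows "fend K s = t"
  unfolding fend_def
proof (rule the_equality)
  let ?xs = "map (walk K s) [0..<Suc (stopN K s)]"
  have "ext_face K ?xs" by (rule face_exists[OF K s])
  moreover have "hd ?xs = s" by (simp del: upt_Suc add: hd_map)
  moreover have "last ?xs = t" using faceP_walk[OF K s P] by (simp del: upt_Suc add: last_map)
  ultimately show "\<exists>xs. ext_face K xs \<and> hd xs = s \<and> last xs = t" by blast
next
  fix t' assume "\<exists>xs. ext_face K xs \<and> hd xs = s \<and> last xs = t'"
  then obtain xs where "ext_face K xs" "hd xs = s" "last xs = t'" by blast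
  then have "faceP K s t'" using ext_face_faceP[OF K] by blast
  then show "t' = t" using faceP_unique[OF K s _ P] by blast
qed

lemma fend_P:
  assumes K: "invK K" and s: "s \<in> S K" "sig2 K s = s"
  shows "faceP K s (fend K s)"
proof -
  let ?xs = "map (walk K s) [0..<Suc (stopN K s)]"
  have f: "ext_face K ?xs" by (rule face_exists[OF K s])
  have "hd ?xs = s" by (simp del: upt_Suc add: hd_map)
  then have P: "faceP K s (last ?xs)" using ext_face_faceP[OF K f] by simp
  then show ?thesis using fend_eq[OF K s P] by simp
qed



lemma edgesU:
  assumes G: "wf2 G" and F: "F \<subseteq> edges G" and h: "h \<in> \<Union>F"
  shows "h \<in> H G" "iota G h \<in> \<Union>F" "iota G h \<noteq> h"
proof -
  obtain e where e: "e \<in> F" "h \<in> e" using h by blast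
  then obtain h0 where h0: "e = {h0, iota G h0}" "h0 \<in> H G" "iota G h0 \<noteq> h0"
    using F unfolding edges_def by blast
  have ii: "iota G (iota G h0) = h0" "iota G h0 \<in> H G" using G h0(2) unfolding wf2_def by auto
  show "h \<in> H G" using e h0 ii by auto
  show "iota G h \<in> \<Union>F" using e h0 ii by auto
  show "iota G h \<noteq> h" using e h0 ii by auto
qed

lemma subg_simps[simp]:
  "V (subg G F) = V G" "H (subg G F) = H G" "S (subg G F) = S G" "nu (subg G F) = nu G"
  "mu (subg G F) = mu G" "sig1 (subg G F) = sig1 G"
  "iota (subg G F) = (\<lambda>h. if h \<in> \<Union>F then iota G h else h)"
  "sig2 (subg G F) = (\<lambda>s. if mu G s \<in> \<Union>F then sig2 G s else s)"
  unfolding subg_def by simp_all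

lemma wf2D:
  assumes "wf2 G"
  shows "finite (V G)" "finite (H G)" "finite (S G)"
   "\<And>h. h \<in> H G \<Longrightarrow> nu G h \<in> V G"
   "\<And>h. h \<in> H G \<Longrightarrow> iota G h \<in> H G" "\<And>h. h \<in> H G \<Longrightarrow> iota G (iota G h) = h"
   "\<And>s. s \<in> S G \<Longrightarrow> mu G s \<in> H G"
   "\<And>s. s \<in> S G \<Longrightarrow> sig1 G s \<in> S G" "\<And>s. s \<in> S G \<Longrightarrow> sig1 G (sig1 G s) = s"
   "\<And>s. s \<in> S G \<Longrightarrow> sig1 G s \<noteq> s" "\<And>s. s \<in> S G \<Longrightarrow> nu G (mu G (sig1 G s)) = nu G (mu G s)"
   "\<And>s. s \<in> S G \<Longrightarrow> sig2 G s \<in> S G" "\<And>s. s \<in> S G \<Longrightarrow> sig2 G (sig2 G s) = s"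
   "\<And>s. s \<in> S G \<Longrightarrow> iota G (mu G s) = mu G (sig2 G s)"
   "\<And>s. s \<in> S G \<Longrightarrow> sig2 G s = s \<longleftrightarrow> iota G (mu G s) = mu G s"
  using assms unfolding wf2_def by auto

lemma wf2I:
  assumes "finite (V G)" "finite (H G)" "finite (S G)"
   "\<And>h. h \<in> H G \<Longrightarrow> nu G h \<in> V G"
   "\<And>h. h \<in> H G \<Longrightarrow> iota G h \<in> H G" "\<And>h. h \<in> H G \<Longrightarrow> iota G (iota G h) = h"
   "\<And>s. s \<in> S G \<Longrightarrow> mu G s \<in> H G"
   "\<And>s. s \<in> S G \<Longrightarrow> sig1 G s \<in> S G" "\<And>s. s \<in> S G \<Longrightarrow> sig1 G (sig1 G s) = s"
   "\<And>s. s \<in> S G \<Longrightarrow> sig1 G s \<noteq> s" "\<And>s. s \<in> S G \<Longrightarrow> nu G (mu G (sig1 G s)) = nu G (mu G s)"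
   "\<And>s. s \<in> S G \<Longrightarrow> sig2 G s \<in> S G" "\<And>s. s \<in> S G \<Longrightarrow> sig2 G (sig2 G s) = s"
   "\<And>s. s \<in> S G \<Longrightarrow> iota G (mu G s) = mu G (sig2 G s)"
   "\<And>s. s \<in> S G \<Longrightarrow> sig2 G s = s \<longleftrightarrow> iota G (mu G s) = mu G s"
  shows "wf2 G"
  using assms unfolding wf2_def by auto

lemma wf2_subg:
  assumes G: "wf2 G" and F: "F \<subseteq> edges G"
  shows "wf2 (subg G F)"
proof (rule wf2I)
  note W = wf2D[OF G]
  note E = edgesU[OF G F]
  show "finite (V (subg G F))" "finite (H (subg G F))" "finite (S (subg G F))" using W by auto
  fix h assume h: "h \<in> H (subg G F)"
  show "nu (subg G F) h \<in> V (subg G F)" using W h by auto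
  show "iota (subg G F) h \<in> H (subg G F)" using W h by auto
  show "iota (subg G F) (iota (subg G F) h) = h" using W h E by auto
next
  note W = wf2D[OF G]
  note E = edgesU[OF G F]
  fix s assume s: "s \<in> S (subg G F)"
  then have s': "s \<in> S G" by simp
  show "mu (subg G F) s \<in> H (subg G F)" "sig1 (subg G F) s \<in> S (subg G F)"
    "sig1 (subg G F) (sig1 (subg G F) s) = s" "sig1 (subg G F) s \<noteq> s"
    "nu (subg G F) (mu (subg G F) (sig1 (subg G F) s)) = nu (subg G F) (mu (subg G F) s)"
    using W s' by auto
  show "sig2 (subg G F) s \<in> S (subg G F)" using W s' by auto
  have mu2: "mu G s \<in> \<Union>F \<Longrightarrow> mu G (sig2 G s) \<in> \<Union>F" using E(2)[of "mu G s"] W(14)[OF s'] by simp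
  show "sig2 (subg G F) (sig2 (subg G F) s) = s"
    by (cases "mu G s \<in> \<Union>F") (use W s' mu2 in auto)
  show "iota (subg G F) (mu (subg G F) s) = mu (subg G F) (sig2 (subg G F) s)"
    by (cases "mu G s \<in> \<Union>F") (use W s' mu2 in auto)
  show "sig2 (subg G F) s = s \<longleftrightarrow> iota (subg G F) (mu (subg G F) s) = mu (subg G F) s"
  proof (cases "mu G s \<in> \<Union>F")
    case True
    then show ?thesis using W(15)[OF s'] by simp
  next
    case False
    then show ?thesis by simp
  qed
qed

lemma wf2_invK: "wf2 K \<Longrightarrow> invK K"
  unfolding invK_def wf2_def by auto

lemma fR_sym: assumes "invK K" shows "sym (fR K)"
  using assms unfolding sym_def fR_def invK_def by fastforce

lemma fR_rtrancl_sym: assumes "invK K" "(x, y) \<in> (fR K)\<^sup>*" shows "(y, x) \<in> (fR K)\<^sup>*"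
  using assms fR_sym by (metis rtrancl_converseI sym_conv_converse_eq sym_rtrancl)

lemma adj_sym: assumes "wf2 K" shows "sym (adj K)"
proof (rule symI)
  fix a b assume "(a, b) \<in> adj K"
  then obtain h where h: "h \<in> H K" "iota K h \<noteq> h" "a = nu K h" "b = nu K (iota K h)"
    unfolding adj_def by blast
  note W = wf2D[OF assms]
  have "iota K h \<in> H K" "iota K (iota K h) = h" using W h by auto
  then have "(nu K (iota K h), nu K (iota K (iota K h))) \<in> adj K"
    unfolding adj_def using h by force
  then show "(b, a) \<in> adj K" using h \<open>iota K (iota K h) = h\<close> by simp
qed

lemma adj_V: assumes "wf2 K" "(v, w) \<in> adj K" shows "v \<in> V K" "w \<in> V K"
  using assms wf2D[OF assms(1)] unfolding adj_def by auto

lemma adj_rtrancl_sym: assumes "wf2 K" "(x, y) \<in> (adj K)\<^sup>*" shows "(y, x) \<in> (adj K)\<^sup>*"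
  using assms adj_sym by (metis rtrancl_converseI sym_conv_converse_eq sym_rtrancl)

lemma adj_rtrancl_V: assumes "wf2 K" "(x, y) \<in> (adj K)\<^sup>*" "x \<in> V K" shows "y \<in> V K"
  using assms(2,3) by (induction rule: rtrancl_induct) (auto dest: adj_V[OF assms(1)])

lemma comp_eq:
  assumes K: "wf2 K" and r: "(v, w) \<in> (adj K)\<^sup>*"
  shows "comp K v = comp K w"
  unfolding comp_def using r adj_rtrancl_sym[OF K r]
  by (auto intro: rtrancl_trans)

lemma comp_self: "v \<in> V K \<Longrightarrow> v \<in> comp K v"
  unfolding comp_def by simp

lemma comp_sub: "comp K v \<subseteq> V K" unfolding comp_def by auto

lemma comp_finite: "wf2 K \<Longrightarrow> finite (comp K v)"
  using comp_sub wf2D(1) finite_subset by metis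

lemma Min_comp_in: "wf2 K \<Longrightarrow> v \<in> V K \<Longrightarrow> Min (comp K v) \<in> comp K v"
  using comp_finite comp_self by (metis Min_in empty_iff)

lemma comp_Min: "wf2 K \<Longrightarrow> v \<in> V K \<Longrightarrow> comp K (Min (comp K v)) = comp K v"
proof -
  assume K: "wf2 K" and v: "v \<in> V K"
  have "Min (comp K v) \<in> comp K v" by (rule Min_comp_in[OF K v])
  then have "(v, Min (comp K v)) \<in> (adj K)\<^sup>*" unfolding comp_def by simp
  then show ?thesis using comp_eq[OF K] by metis
qed

lemma comp_mem_iff: "w \<in> comp K v \<longleftrightarrow> w \<in> V K \<and> (v, w) \<in> (adj K)\<^sup>*"
  unfolding comp_def by simp

lemma contr_simps:
  "V (contr G F) = Min ` comps (subg G F)"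
  "H (contr G F) = {h \<in> H G. iota (subg G F) h = h}"
  "S (contr G F) = {s \<in> S G. sig2 (subg G F) s = s}"
  "nu (contr G F) = (\<lambda>h. Min (comp (subg G F) (nu G h)))"
  "iota (contr G F) = iota G" "mu (contr G F) = mu G" "sig2 (contr G F) = sig2 G"
  "sig1 (contr G F) = fend (subg G F)"
  unfolding contr_def Let_def fend_def by simp_all

lemma H_contr: assumes G: "wf2 G" and F: "F \<subseteq> edges G"
  shows "H (contr G F) = {h \<in> H G. h \<notin> \<Union>F}"
  unfolding contr_simps using edgesU[OF G F] by auto

lemma S_contr: assumes G: "wf2 G" and F: "F \<subseteq> edges G"
  shows "S (contr G F) = {s \<in> S G. mu G s \<notin> \<Union>F}"
proof -
  have "\<And>s. s \<in> S G \<Longrightarrow> mu G s \<in> \<Union>F \<Longrightarrow> sig2 G s \<noteq> s"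
    using edgesU(3)[OF G F] wf2D(15)[OF G] by metis
  then show ?thesis unfolding contr_simps by auto
qed

lemma fR_adj:
  assumes G: "wf2 G" and F: "F \<subseteq> edges G" and r: "(s, t) \<in> (fR (subg G F))\<^sup>*" and s: "s \<in> S G"
  shows "(nu G (mu G s), nu G (mu G t)) \<in> (adj (subg G F))\<^sup>*"
  using r
proof (induction rule: rtrancl_induct)
  case base then show ?case by simp
next
  case (step y z)
  note W = wf2D[OF G]
  have y0: "y \<in> S (subg G F)" and z0: "z = sig1 (subg G F) y \<or> z = sig2 (subg G F) y"
    using step(2) unfolding fR_def by blast+
  have y: "y \<in> S G" using y0 by simp
  have z: "z = sig1 G y \<or> z = sig2 (subg G F) y" using z0 by simp
  have "(nu G (mu G y), nu G (mu G z)) \<in> (adj (subg G F))\<^sup>*"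
  proof (cases "z = sig1 G y")
    case True then show ?thesis using W y by simp
  next
    case False
    then have z2: "z = (if mu G y \<in> \<Union>F then sig2 G y else y)" using z by simp
    show ?thesis
    proof (cases "mu G y \<in> \<Union>F")
      case True
      have "mu G z = iota G (mu G y)" using z2 True W(14)[OF y] by simp
      moreover have "iota G (mu G y) \<noteq> mu G y" using edgesU(3)[OF G F True] .
      moreover have "mu G y \<in> H G" using W y by simp
      ultimately have "(nu G (mu G y), nu G (mu G z)) \<in> adj (subg G F)"
        unfolding adj_def using True by force
      then show ?thesis by simp
    next
      case False then show ?thesis using z2 by simp
    qed
  qed
  then show ?case using step.IH by (meson rtrancl_trans)
qed

lemma invK_subg: "wf2 G \<Longrightarrow> F \<subseteq> edges G \<Longrightarrow> invK (subg G F)"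
  using wf2_invK wf2_subg by blast

lemma wf2_contr:
  assumes G: "wf2 G" and F: "F \<subseteq> edges G"
  shows "wf2 (contr G F)"
proof (rule wf2I)
  let ?K = "subg G F"
  note W = wf2D[OF G]
  note E = edgesU[OF G F]
  have K: "wf2 ?K" using wf2_subg[OF G F] .
  have iK: "invK ?K" using wf2_invK[OF K] .
  note HC = H_contr[OF G F] and SC = S_contr[OF G F]
  show "finite (V (contr G F))" using W unfolding contr_simps comps_def by simp
  show "finite (H (contr G F))" using W unfolding HC by simp
  show "finite (S (contr G F))" using W unfolding SC by simp
  {
    fix h assume h: "h \<in> H (contr G F)"
    then have h': "h \<in> H G" "h \<notin> \<Union>F" using HC by auto
    show "nu (contr G F) h \<in> V (contr G F)" using W h' unfolding contr_simps comps_def by auto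
    have "iota G h \<notin> \<Union>F" using E(2)[of "iota G h"] W h' by auto
    then show "iota (contr G F) h \<in> H (contr G F)" using W h' HC by (simp add: contr_simps)
    show "iota (contr G F) (iota (contr G F) h) = h" using W h' by (simp add: contr_simps)
  }
  fix s assume s: "s \<in> S (contr G F)"
  then have s': "s \<in> S G" "mu G s \<notin> \<Union>F" using SC by auto
  have sK: "s \<in> S ?K" "sig2 ?K s = s" using s' by auto
  show "mu (contr G F) s \<in> H (contr G F)" using W s' HC by (simp add: contr_simps)
  have P: "faceP ?K s (fend ?K s)" by (rule fend_P[OF iK sK])
  then have t: "fend ?K s \<in> S G" "fend ?K s \<noteq> s" "sig2 ?K (fend ?K s) = fend ?K s"
    "(s, fend ?K s) \<in> (fR ?K)\<^sup>*" unfolding faceP_def by auto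
  have tC: "fend ?K s \<in> S (contr G F)" using t unfolding contr_simps by simp
  then show "sig1 (contr G F) s \<in> S (contr G F)" by (simp add: contr_simps)
  have "faceP ?K (fend ?K s) s" unfolding faceP_def using t sK fR_rtrancl_sym[OF iK t(4)] by auto
  then have "fend ?K (fend ?K s) = s" using fend_eq[OF iK] t by simp
  then show "sig1 (contr G F) (sig1 (contr G F) s) = s" by (simp add: contr_simps)
  show "sig1 (contr G F) s \<noteq> s" using t by (simp add: contr_simps)
  have "(nu G (mu G s), nu G (mu G (fend ?K s))) \<in> (adj ?K)\<^sup>*" using fR_adj[OF G F t(4) s'(1)] .
  then have "comp ?K (nu G (mu G s)) = comp ?K (nu G (mu G (fend ?K s)))" using comp_eq[OF K] by blast
  then show "nu (contr G F) (mu (contr G F) (sig1 (contr G F) s)) = nu (contr G F) (mu (contr G F) s)"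
    by (simp add: contr_simps)
  have "mu G (sig2 G s) \<notin> \<Union>F" using E(2)[of "mu G (sig2 G s)"] W s' by auto
  then show "sig2 (contr G F) s \<in> S (contr G F)" using W s' SC by (simp add: contr_simps)
  show "sig2 (contr G F) (sig2 (contr G F) s) = s" "iota (contr G F) (mu (contr G F) s) = mu (contr G F) (sig2 (contr G F) s)"
    "sig2 (contr G F) s = s \<longleftrightarrow> iota (contr G F) (mu (contr G F) s) = mu (contr G F) s"
    using W s' by (simp_all add: contr_simps)
qed



definition isom :: "graph2 \<Rightarrow> graph2 \<Rightarrow> (nat \<Rightarrow> nat) \<Rightarrow> (nat \<Rightarrow> nat) \<Rightarrow> (nat \<Rightarrow> nat) \<Rightarrow> bool" where
  "isom A B fV fH fS \<longleftrightarrow> bij_betw fV (V A) (V B) \<and> bij_betw fH (H A) (H B)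
     \<and> bij_betw fS (S A) (S B)
     \<and> (\<forall>h\<in>H A. fV (nu A h) = nu B (fH h) \<and> fH (iota A h) = iota B (fH h))
     \<and> (\<forall>s\<in>S A. fH (mu A s) = mu B (fS s) \<and> fS (sig1 A s) = sig1 B (fS s)
                  \<and> fS (sig2 A s) = sig2 B (fS s))"

lemma iso2_isom: "iso2 A B \<longleftrightarrow> (\<exists>fV fH fS. isom A B fV fH fS)"
  unfolding iso2_def isom_def by simp

lemma rtrancl_map_fwd:
  assumes "(x, y) \<in> R\<^sup>*" shows "(f x, f y) \<in> (map_prod f f ` R)\<^sup>*"
  using assms
proof (induction rule: rtrancl_induct)
  case base then show ?case by simp
next
  case (step y z)
  then have "(f y, f z) \<in> map_prod f f ` R" by force
  then show ?case using step.IH by (meson rtrancl.rtrancl_into_rtrancl)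
qed

lemma rtrancl_map_inj:
  assumes inj: "inj_on f A" and R: "R \<subseteq> A \<times> A" and r: "(f x, y') \<in> (map_prod f f ` R)\<^sup>*" and x: "x \<in> A"
  shows "\<exists>y\<in>A. y' = f y \<and> (x, y) \<in> R\<^sup>*"
  using r
proof (induction rule: rtrancl_induct)
  case base then show ?case using x by blast
next
  case (step y' z')
  obtain y where y: "y \<in> A" "y' = f y" "(x, y) \<in> R\<^sup>*" using step.IH by blast
  obtain a b where ab: "(a, b) \<in> R" "y' = f a" "z' = f b" using step(2) by auto
  have "a \<in> A" "b \<in> A" using ab R by auto
  then have "a = y" using inj y ab by (metis inj_onD)
  then have "(x, b) \<in> R\<^sup>*" using y ab by (meson rtrancl.rtrancl_into_rtrancl)
  then show ?case using ab \<open>b \<in> A\<close> by blast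
qed

lemma adj_sub: "wf2 A \<Longrightarrow> adj A \<subseteq> V A \<times> V A"
  using adj_V by (metis subrelI mem_Sigma_iff)

lemma isom_adj:
  assumes m: "isom A B fV fH fS" and A: "wf2 A"
  shows "adj B = map_prod fV fV ` adj A"
proof -
  note W = wf2D[OF A]
  have bH: "bij_betw fH (H A) (H B)" and hh: "\<forall>h\<in>H A. fV (nu A h) = nu B (fH h) \<and> fH (iota A h) = iota B (fH h)"
    using m unfolding isom_def by auto
  have inj: "inj_on fH (H A)" using bH bij_betw_def by blast
  show ?thesis
  proof
    show "adj B \<subseteq> map_prod fV fV ` adj A"
    proof
      fix p assume "p \<in> adj B"
      then obtain h' where h': "h' \<in> H B" "iota B h' \<noteq> h'" "p = (nu B h', nu B (iota B h'))"
        unfolding adj_def by blast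
      obtain h where h: "h \<in> H A" "h' = fH h" using h' bH by (metis bij_betw_imp_surj_on imageE)
      have "iota A h \<in> H A" using W h by simp
      have "iota A h \<noteq> h" using h h' hh by metis
      then have "(nu A h, nu A (iota A h)) \<in> adj A" unfolding adj_def using h by blast
      moreover have "p = map_prod fV fV (nu A h, nu A (iota A h))"
        using h h' hh \<open>iota A h \<in> H A\<close> by simp
      ultimately show "p \<in> map_prod fV fV ` adj A" by blast
    qed
  next
    show "map_prod fV fV ` adj A \<subseteq> adj B"
    proof
      fix p assume "p \<in> map_prod fV fV ` adj A"
      then obtain h where h: "h \<in> H A" "iota A h \<noteq> h" "p = (fV (nu A h), fV (nu A (iota A h)))"
        unfolding adj_def by auto
      have ih: "iota A h \<in> H A" using W h by simp
      have "fH (iota A h) \<noteq> fH h" using inj h ih by (metis inj_onD)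
      then have "iota B (fH h) \<noteq> fH h" using hh h by metis
      moreover have "fH h \<in> H B" using bH h bij_betw_apply by metis
      ultimately have "(nu B (fH h), nu B (iota B (fH h))) \<in> adj B" unfolding adj_def by blast
      moreover have "p = (nu B (fH h), nu B (iota B (fH h)))" using h hh ih by metis
      ultimately show "p \<in> adj B" by simp
    qed
  qed
qed

lemma isom_adj_rtrancl:
  assumes m: "isom A B fV fH fS" and A: "wf2 A" and u: "u \<in> V A" and w: "w \<in> V A"
  shows "(fV u, fV w) \<in> (adj B)\<^sup>* \<longleftrightarrow> (u, w) \<in> (adj A)\<^sup>*"
proof
  have inj: "inj_on fV (V A)" using m unfolding isom_def bij_betw_def by auto
  assume "(fV u, fV w) \<in> (adj B)\<^sup>*"
  then have "(fV u, fV w) \<in> (map_prod fV fV ` adj A)\<^sup>*" using isom_adj[OF m A] by simp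
  from rtrancl_map_inj[OF inj adj_sub[OF A] this u]
  obtain y where "y \<in> V A" "fV w = fV y" "(u, y) \<in> (adj A)\<^sup>*" by blast
  then show "(u, w) \<in> (adj A)\<^sup>*" using inj w by (metis inj_onD)
next
  assume "(u, w) \<in> (adj A)\<^sup>*"
  from rtrancl_map_fwd[OF this, of fV] show "(fV u, fV w) \<in> (adj B)\<^sup>*" using isom_adj[OF m A] by simp
qed

lemma isom_fR:
  assumes m: "isom A B fV fH fS"
  shows "map_prod fS fS ` fR A \<subseteq> fR B"
proof
  have bS: "bij_betw fS (S A) (S B)" and ss: "\<forall>s\<in>S A. fS (sig1 A s) = sig1 B (fS s) \<and> fS (sig2 A s) = sig2 B (fS s)"
    using m unfolding isom_def by auto
  fix p assume "p \<in> map_prod fS fS ` fR A"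
  then obtain x y where xy: "(x, y) \<in> fR A" "p = (fS x, fS y)" by auto
  then have x: "x \<in> S A" and y: "y = sig1 A x \<or> y = sig2 A x" unfolding fR_def by auto
  have "fS x \<in> S B" using bS x bij_betw_apply by metis
  then show "p \<in> fR B" using xy y ss x unfolding fR_def by auto
qed

lemma isom_fR_rtrancl:
  assumes m: "isom A B fV fH fS" and r: "(x, y) \<in> (fR A)\<^sup>*"
  shows "(fS x, fS y) \<in> (fR B)\<^sup>*"
  using rtrancl_map_fwd[OF r, of fS] isom_fR[OF m] rtrancl_mono by blast

lemma comp_eq_iff:
  assumes K: "wf2 K" and v: "v \<in> V K" and w: "w \<in> V K"
  shows "comp K v = comp K w \<longleftrightarrow> (v, w) \<in> (adj K)\<^sup>*"
proof
  assume "comp K v = comp K w"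
  then have "w \<in> comp K v" using comp_self[OF w] by simp
  then show "(v, w) \<in> (adj K)\<^sup>*" unfolding comp_def by simp
next
  assume "(v, w) \<in> (adj K)\<^sup>*" then show "comp K v = comp K w" using comp_eq[OF K] by blast
qed

lemma V_contr_sub: assumes G: "wf2 G" and F: "F \<subseteq> edges G" shows "V (contr G F) \<subseteq> V G"
proof
  fix m assume "m \<in> V (contr G F)"
  then obtain u where u: "u \<in> V G" "m = Min (comp (subg G F) u)" unfolding contr_simps comps_def by auto
  have "m \<in> comp (subg G F) u" using Min_comp_in[OF wf2_subg[OF G F]] u by simp
  then show "m \<in> V G" using comp_sub by fastforce
qed

lemma contr_crit:
  assumes G: "wf2 G" and F: "F \<subseteq> edges G"
    and bH: "bij_betw fH (H (contr G F)) (H C)" and bS: "bij_betw fS (S (contr G F)) (S C)"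
    and psiV: "\<And>u. u \<in> V G \<Longrightarrow> psi u \<in> V C"
    and psiS: "\<And>c. c \<in> V C \<Longrightarrow> \<exists>u\<in>V G. psi u = c"
    and psiE: "\<And>u w. u \<in> V G \<Longrightarrow> w \<in> V G \<Longrightarrow> psi u = psi w \<longleftrightarrow> (u, w) \<in> (adj (subg G F))\<^sup>*"
    and nuC: "\<And>h. h \<in> H (contr G F) \<Longrightarrow> nu C (fH h) = psi (nu G h)"
    and iotaC: "\<And>h. h \<in> H (contr G F) \<Longrightarrow> fH (iota G h) = iota C (fH h)"
    and muC: "\<And>s. s \<in> S (contr G F) \<Longrightarrow> fH (mu G s) = mu C (fS s)"
    and sig1C: "\<And>s. s \<in> S (contr G F) \<Longrightarrow> fS (fend (subg G F) s) = sig1 C (fS s)"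
    and sig2C: "\<And>s. s \<in> S (contr G F) \<Longrightarrow> fS (sig2 G s) = sig2 C (fS s)"
  shows "iso2 (contr G F) C"
proof -
  let ?K = "subg G F"
  have K: "wf2 ?K" using wf2_subg[OF G F] .
  note W = wf2D[OF G]
  have mK: "\<And>u. u \<in> V G \<Longrightarrow> Min (comp ?K u) \<in> V G \<and> (u, Min (comp ?K u)) \<in> (adj ?K)\<^sup>*"
    using Min_comp_in[OF K] comp_sub unfolding comp_def by fastforce
  have psim: "\<And>u. u \<in> V G \<Longrightarrow> psi (Min (comp ?K u)) = psi u"
    using psiE mK by metis
  have bV: "bij_betw psi (V (contr G F)) (V C)"
    unfolding bij_betw_def
  proof
    show "inj_on psi (V (contr G F))"
    proof (rule inj_onI)
      fix m1 m2 assume m1: "m1 \<in> V (contr G F)" and m2: "m2 \<in> V (contr G F)" and eq: "psi m1 = psi m2"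
      obtain u1 where u1: "u1 \<in> V G" "m1 = Min (comp ?K u1)" using m1 unfolding contr_simps comps_def by auto
      obtain u2 where u2: "u2 \<in> V G" "m2 = Min (comp ?K u2)" using m2 unfolding contr_simps comps_def by auto
      have "psi u1 = psi u2" using eq psim u1 u2 by simp
      then have "(u1, u2) \<in> (adj ?K)\<^sup>*" using psiE u1 u2 by blast
      then have "comp ?K u1 = comp ?K u2" using comp_eq[OF K] by blast
      then show "m1 = m2" using u1 u2 by simp
    qed
  next
    show "psi ` V (contr G F) = V C"
    proof
      show "psi ` V (contr G F) \<subseteq> V C" using psiV V_contr_sub[OF G F] by blast
    next
      show "V C \<subseteq> psi ` V (contr G F)"
      proof
        fix c assume "c \<in> V C"
        then obtain u where u: "u \<in> V G" "psi u = c" using psiS by blast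
        have "Min (comp ?K u) \<in> V (contr G F)" unfolding contr_simps comps_def using u by simp
        then show "c \<in> psi ` V (contr G F)" using psim[OF u(1)] u(2) by (metis image_eqI)
      qed
    qed
  qed
  show ?thesis unfolding iso2_def
  proof (intro exI conjI ballI)
    show "bij_betw psi (V (contr G F)) (V C)" by (rule bV)
    show "bij_betw fH (H (contr G F)) (H C)" by (rule bH)
    show "bij_betw fS (S (contr G F)) (S C)" by (rule bS)
  next
    fix h assume h: "h \<in> H (contr G F)"
    then have "h \<in> H G" unfolding contr_simps by simp
    then show "psi (nu (contr G F) h) = nu C (fH h)" using psim W nuC h by (simp add: contr_simps)
    show "fH (iota (contr G F) h) = iota C (fH h)" using iotaC h by (simp add: contr_simps)
  next
    fix s assume s: "s \<in> S (contr G F)"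
    show "fH (mu (contr G F) s) = mu C (fS s)" using muC s by (simp add: contr_simps)
    show "fS (sig1 (contr G F) s) = sig1 C (fS s)" using sig1C s by (simp add: contr_simps)
    show "fS (sig2 (contr G F) s) = sig2 C (fS s)" using sig2C s by (simp add: contr_simps)
  qed
qed

lemma isomD:
  assumes "isom A B fV fH fS"
  shows "bij_betw fV (V A) (V B)" "bij_betw fH (H A) (H B)" "bij_betw fS (S A) (S B)"
    "\<And>h. h \<in> H A \<Longrightarrow> fV (nu A h) = nu B (fH h)" "\<And>h. h \<in> H A \<Longrightarrow> fH (iota A h) = iota B (fH h)"
    "\<And>s. s \<in> S A \<Longrightarrow> fH (mu A s) = mu B (fS s)" "\<And>s. s \<in> S A \<Longrightarrow> fS (sig1 A s) = sig1 B (fS s)"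
    "\<And>s. s \<in> S A \<Longrightarrow> fS (sig2 A s) = sig2 B (fS s)"
  using assms unfolding isom_def by auto

lemma isom_edges:
  assumes m: "isom A B fV fH fS" and A: "wf2 A" and F: "F \<subseteq> edges A"
  shows "(\<lambda>e. fH ` e) ` F \<subseteq> edges B" "\<Union>((\<lambda>e. fH ` e) ` F) = fH ` \<Union>F"
proof -
  note M = isomD[OF m]
  show "(\<lambda>e. fH ` e) ` F \<subseteq> edges B"
  proof
    fix e' assume "e' \<in> (\<lambda>e. fH ` e) ` F"
    then obtain e where e: "e \<in> F" "e' = fH ` e" by blast
    then obtain h where h: "e = {h, iota A h}" "h \<in> H A" "iota A h \<noteq> h" using F unfolding edges_def by blast
    have ih: "iota A h \<in> H A" using wf2D(5)[OF A h(2)] .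
    have inj: "inj_on fH (H A)" using M(2) bij_betw_def by blast
    have "fH (iota A h) \<noteq> fH h" using inj h ih by (metis inj_onD)
    then have "iota B (fH h) \<noteq> fH h" using M(5)[OF h(2)] by simp
    moreover have "fH h \<in> H B" using M(2) h bij_betw_apply by metis
    moreover have "e' = {fH h, iota B (fH h)}" using e h M(5)[OF h(2)] by simp
    ultimately show "e' \<in> edges B" unfolding edges_def by blast
  qed
  show "\<Union>((\<lambda>e. fH ` e) ` F) = fH ` \<Union>F" by blast
qed

lemma isom_subg:
  assumes m: "isom A B fV fH fS" and A: "wf2 A" and F: "F \<subseteq> edges A"
  shows "isom (subg A F) (subg B ((\<lambda>e. fH ` e) ` F)) fV fH fS"
proof -
  note M = isomD[OF m]
  have U: "\<Union>((\<lambda>e. fH ` e) ` F) = fH ` \<Union>F" using isom_edges[OF m A F] by simp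
  have inj: "inj_on fH (H A)" using M(2) bij_betw_def by blast
  have UA: "\<Union>F \<subseteq> H A" using edgesU(1)[OF A F] by blast
  have mem: "\<And>h. h \<in> H A \<Longrightarrow> fH h \<in> fH ` \<Union>F \<longleftrightarrow> h \<in> \<Union>F"
    using inj UA by (auto dest: inj_onD)
  show ?thesis unfolding isom_def
  proof (intro conjI ballI)
    show "bij_betw fV (V (subg A F)) (V (subg B ((\<lambda>e. fH ` e) ` F)))" using M by simp
    show "bij_betw fH (H (subg A F)) (H (subg B ((\<lambda>e. fH ` e) ` F)))" using M by simp
    show "bij_betw fS (S (subg A F)) (S (subg B ((\<lambda>e. fH ` e) ` F)))" using M by simp
  next
    fix h assume h: "h \<in> H (subg A F)"
    then have h': "h \<in> H A" by simp
    show "fV (nu (subg A F) h) = nu (subg B ((\<lambda>e. fH ` e) ` F)) (fH h)" using M h' by simp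
    show "fH (iota (subg A F) h) = iota (subg B ((\<lambda>e. fH ` e) ` F)) (fH h)"
      using M(5)[OF h'] mem[OF h'] U by simp
  next
    fix s assume s: "s \<in> S (subg A F)"
    then have s': "s \<in> S A" by simp
    have muh: "mu A s \<in> H A" using wf2D(7)[OF A s'] .
    show "fH (mu (subg A F) s) = mu (subg B ((\<lambda>e. fH ` e) ` F)) (fS s)" using M s' by simp
    show "fS (sig1 (subg A F) s) = sig1 (subg B ((\<lambda>e. fH ` e) ` F)) (fS s)" using M s' by simp
    show "fS (sig2 (subg A F) s) = sig2 (subg B ((\<lambda>e. fH ` e) ` F)) (fS s)"
      using M(6)[OF s'] M(8)[OF s'] mem[OF muh] U by auto
  qed
qed

lemma bij_betw_restrict_pred:
  assumes b: "bij_betw f A B" and P: "\<And>x. x \<in> A \<Longrightarrow> Q (f x) \<longleftrightarrow> P x"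
  shows "bij_betw f {x \<in> A. P x} {y \<in> B. Q y}"
proof -
  have "f ` {x \<in> A. P x} = {y \<in> B. Q y}"
  proof
    show "f ` {x \<in> A. P x} \<subseteq> {y \<in> B. Q y}" using b P bij_betw_apply by fastforce
    show "{y \<in> B. Q y} \<subseteq> f ` {x \<in> A. P x}"
    proof
      fix y assume "y \<in> {y \<in> B. Q y}"
      then obtain x where "x \<in> A" "y = f x" "Q y" using b by (auto simp: bij_betw_def)
      then show "y \<in> f ` {x \<in> A. P x}" using P by blast
    qed
  qed
  moreover have "inj_on f {x \<in> A. P x}" using b by (auto simp: bij_betw_def intro: inj_on_subset)
  ultimately show ?thesis by (simp add: bij_betw_def)
qed

lemma isom_contr:
  assumes m: "isom A B fV fH fS" and A: "wf2 A" and B: "wf2 B" and F: "F \<subseteq> edges A"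
  shows "iso2 (contr A F) (contr B ((\<lambda>e. fH ` e) ` F))"
proof -
  let ?F = "(\<lambda>e. fH ` e) ` F"
  let ?K = "subg A F" and ?K' = "subg B ?F"
  note M = isomD[OF m]
  have F': "?F \<subseteq> edges B" using isom_edges(1)[OF m A F] .
  have U: "\<Union>?F = fH ` \<Union>F" using isom_edges(2)[OF m A F] .
  have mK: "isom ?K ?K' fV fH fS" by (rule isom_subg[OF m A F])
  have K: "wf2 ?K" using wf2_subg[OF A F] .
  have K': "wf2 ?K'" using wf2_subg[OF B F'] .
  have inj: "inj_on fH (H A)" using M(2) bij_betw_def by blast
  have UA: "\<Union>F \<subseteq> H A" using edgesU(1)[OF A F] by blast
  have mem: "\<And>h. h \<in> H A \<Longrightarrow> fH h \<in> fH ` \<Union>F \<longleftrightarrow> h \<in> \<Union>F"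
    using inj UA by (auto dest: inj_onD)
  note HA = H_contr[OF A F] and HB = H_contr[OF B F'] and SA = S_contr[OF A F] and SB = S_contr[OF B F']
  show ?thesis
  proof (rule contr_crit[OF A F, where fH = fH and fS = fS and psi = "\<lambda>u. Min (comp ?K' (fV u))"])
    show "bij_betw fH (H (contr A F)) (H (contr B ?F))"
      unfolding HA HB U by (rule bij_betw_restrict_pred[OF M(2)]) (use mem in blast)
    show "bij_betw fS (S (contr A F)) (S (contr B ?F))"
      unfolding SA SB U
    proof (rule bij_betw_restrict_pred[OF M(3)])
      fix x assume x: "x \<in> S A"
      have "mu B (fS x) = fH (mu A x)" using M(6)[OF x] by simp
      then show "(mu B (fS x) \<notin> fH ` \<Union>F) \<longleftrightarrow> (mu A x \<notin> \<Union>F)" using mem[OF wf2D(7)[OF A x]] by simp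
    qed
  next
    fix u assume u: "u \<in> V A"
    have "fV u \<in> V B" using M(1) u bij_betw_apply by metis
    then show "Min (comp ?K' (fV u)) \<in> V (contr B ?F)" unfolding contr_simps comps_def by simp
  next
    fix c assume "c \<in> V (contr B ?F)"
    then obtain v where v: "v \<in> V B" "c = Min (comp ?K' v)" unfolding contr_simps comps_def by auto
    then obtain u where "u \<in> V A" "v = fV u" using M(1) by (metis bij_betw_imp_surj_on imageE)
    then show "\<exists>u\<in>V A. Min (comp ?K' (fV u)) = c" using v by blast
  next
    fix u w assume u: "u \<in> V A" and w: "w \<in> V A"
    have fu: "fV u \<in> V ?K'" "fV w \<in> V ?K'" using M(1) u w bij_betw_apply by (metis subg_simps(1))+
    have "Min (comp ?K' (fV u)) = Min (comp ?K' (fV w)) \<longleftrightarrow> comp ?K' (fV u) = comp ?K' (fV w)"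
      using comp_Min[OF K' fu(1)] comp_Min[OF K' fu(2)] by metis
    also have "\<dots> \<longleftrightarrow> (fV u, fV w) \<in> (adj ?K')\<^sup>*" using comp_eq_iff[OF K' fu] .
    also have "\<dots> \<longleftrightarrow> (u, w) \<in> (adj ?K)\<^sup>*" using isom_adj_rtrancl[OF mK K] u w by simp
    finally show "Min (comp ?K' (fV u)) = Min (comp ?K' (fV w)) \<longleftrightarrow> (u, w) \<in> (adj ?K)\<^sup>*" .
  next
    fix h assume "h \<in> H (contr A F)"
    then have h: "h \<in> H A" using HA by simp
    show "nu (contr B ?F) (fH h) = Min (comp ?K' (fV (nu A h)))" using M(4)[OF h] by (simp add: contr_simps)
    show "fH (iota A h) = iota (contr B ?F) (fH h)" using M(5)[OF h] by (simp add: contr_simps)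
  next
    fix s assume sC: "s \<in> S (contr A F)"
    then have s: "s \<in> S A" "mu A s \<notin> \<Union>F" using SA by auto
    show "fH (mu A s) = mu (contr B ?F) (fS s)" using M(6)[OF s(1)] by (simp add: contr_simps)
    show "fS (sig2 A s) = sig2 (contr B ?F) (fS s)" using M(8)[OF s(1)] by (simp add: contr_simps)
    have iK: "invK ?K" "invK ?K'" using K K' wf2_invK by auto
    have sK: "s \<in> S ?K" "sig2 ?K s = s" using s by auto
    have P: "faceP ?K s (fend ?K s)" by (rule fend_P[OF iK(1) sK])
    then have t: "fend ?K s \<in> S A" "fend ?K s \<noteq> s" "sig2 ?K (fend ?K s) = fend ?K s"
      "(s, fend ?K s) \<in> (fR ?K)\<^sup>*" unfolding faceP_def by auto
    have injS: "inj_on fS (S A)" using M(3) bij_betw_def by blast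
    have fsK: "fS s \<in> S ?K'" "sig2 ?K' (fS s) = fS s" using isomD(3,8)[OF mK] sK bij_betw_apply by (metis subg_simps(3))+
    have "faceP ?K' (fS s) (fS (fend ?K s))"
      unfolding faceP_def
    proof (intro conjI)
      show "fS (fend ?K s) \<in> S ?K'" using M(3) t(1) bij_betw_apply by (metis subg_simps(3))
      show "fS (fend ?K s) \<noteq> fS s" using injS t(1,2) s(1) by (metis inj_onD)
      show "sig2 ?K' (fS (fend ?K s)) = fS (fend ?K s)" using isomD(8)[OF mK] t(1,3) by (metis subg_simps(3))
      show "(fS s, fS (fend ?K s)) \<in> (fR ?K')\<^sup>*" using isom_fR_rtrancl[OF mK t(4)] .
    qed
    then have "fend ?K' (fS s) = fS (fend ?K s)" using fend_eq[OF iK(2) fsK] by blast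
    then show "fS (fend ?K s) = sig1 (contr B ?F) (fS s)" by (simp add: contr_simps)
  qed
qed

lemma iso2_subg_contr:
  assumes i: "iso2 A B" and A: "wf2 A" and B: "wf2 B" and F: "F \<subseteq> edges A"
  shows "\<exists>F'. F' \<subseteq> edges B \<and> iso2 (subg A F) (subg B F') \<and> iso2 (contr A F) (contr B F')"
proof -
  obtain fV fH fS where m: "isom A B fV fH fS" using i iso2_isom by blast
  have "iso2 (subg A F) (subg B ((\<lambda>e. fH ` e) ` F))"
    unfolding iso2_isom using isom_subg[OF m A F] by blast
  then show ?thesis
    using isom_edges(1)[OF m A F] isom_contr[OF m A B F] by blast
qed



lemma edges_contr_sub:
  assumes G: "wf2 G" and F: "F \<subseteq> edges G"
  shows "edges (contr G F) \<subseteq> edges G" "\<Union>(edges (contr G F)) \<subseteq> H G - \<Union>F"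
proof -
  note HC = H_contr[OF G F]
  have G1: "wf2 (contr G F)" using wf2_contr[OF G F] .
  show "edges (contr G F) \<subseteq> edges G"
  proof
    fix e assume "e \<in> edges (contr G F)"
    then obtain h where h: "e = {h, iota G h}" "h \<in> H (contr G F)" "iota G h \<noteq> h"
      unfolding edges_def contr_simps by blast
    then show "e \<in> edges G" unfolding edges_def HC by blast
  qed
  show "\<Union>(edges (contr G F)) \<subseteq> H G - \<Union>F"
  proof
    fix x assume "x \<in> \<Union>(edges (contr G F))"
    then obtain h where h: "x \<in> {h, iota G h}" "h \<in> H (contr G F)"
      unfolding edges_def contr_simps by blast
    have "iota (contr G F) h \<in> H (contr G F)" using wf2D(5)[OF G1 h(2)] .
    then have "iota G h \<in> H (contr G F)" by (simp add: contr_simps)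
    then show "x \<in> H G - \<Union>F" using h HC by auto
  qed
qed

lemma subg_subg: assumes U: "\<Union>F \<subseteq> \<Union>F2" shows "subg (subg G F2) F = subg G F"
proof -
  have "(\<lambda>h. if h \<in> \<Union>F then iota (subg G F2) h else h) = (\<lambda>h. if h \<in> \<Union>F then iota G h else h)"
    using U by (intro ext) (simp; blast)
  moreover have "(\<lambda>s. if mu (subg G F2) s \<in> \<Union>F then sig2 (subg G F2) s else s) = (\<lambda>s. if mu G s \<in> \<Union>F then sig2 G s else s)"
    using U by (intro ext) (simp; blast)
  ultimately show ?thesis unfolding subg_def[of "subg G F2"] by (simp add: subg_def)
qed

lemma adj_subg:
  assumes G: "wf2 G" and X: "X \<subseteq> edges G"
  shows "adj (subg G X) = {(nu G h, nu G (iota G h)) | h. h \<in> \<Union>X}"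
proof -
  have "\<And>h. h \<in> H G \<Longrightarrow> (if h \<in> \<Union>X then iota G h else h) \<noteq> h \<longleftrightarrow> h \<in> \<Union>X"
    using edgesU(3)[OF G X] by auto
  show ?thesis
  proof
    show "adj (subg G X) \<subseteq> {(nu G h, nu G (iota G h)) | h. h \<in> \<Union>X}"
    proof
      fix p assume "p \<in> adj (subg G X)"
      then obtain h where h: "h \<in> H G" "iota (subg G X) h \<noteq> h" "p = (nu G h, nu G (iota (subg G X) h))"
        unfolding adj_def by auto
      then have "h \<in> \<Union>X" by (auto split: if_splits)
      then show "p \<in> {(nu G h, nu G (iota G h)) | h. h \<in> \<Union>X}" using h by auto
    qed
  next
    show "{(nu G h, nu G (iota G h)) | h. h \<in> \<Union>X} \<subseteq> adj (subg G X)"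
    proof
      fix p assume "p \<in> {(nu G h, nu G (iota G h)) | h. h \<in> \<Union>X}"
      then obtain h where h: "h \<in> \<Union>X" "p = (nu G h, nu G (iota G h))" by blast
      have "h \<in> H (subg G X)" "iota (subg G X) h \<noteq> h" "p = (nu (subg G X) h, nu (subg G X) (iota (subg G X) h))"
        using h edgesU[OF G X h(1)] by auto
      then show "p \<in> adj (subg G X)" unfolding adj_def by blast
    qed
  qed
qed

lemma subg_contr_iso:
  assumes G: "wf2 G" and F: "F \<subseteq> edges G" and F2: "F2 \<subseteq> edges (contr G F)"
  shows "F \<union> F2 \<subseteq> edges G" "F \<subseteq> edges (subg G (F \<union> F2))"
    "iso2 (contr (subg G (F \<union> F2)) F) (subg (contr G F) F2)"
proof -
  note EC = edges_contr_sub[OF G F]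
  show FF: "F \<union> F2 \<subseteq> edges G" using F F2 EC by blast
  show "F \<subseteq> edges (subg G (F \<union> F2))"
  proof
    fix e assume e: "e \<in> F"
    then obtain h where h: "e = {h, iota G h}" "h \<in> H G" "iota G h \<noteq> h" using F unfolding edges_def by blast
    have "h \<in> \<Union>(F \<union> F2)" using e h by blast
    then show "e \<in> edges (subg G (F \<union> F2))" unfolding edges_def using h by auto
  qed
  let ?G' = "subg G (F \<union> F2)"
  have KK: "subg ?G' F = subg G F" by (rule subg_subg) blast
  have U2: "\<Union>F2 \<inter> \<Union>F = {}" using EC(2) F2 by blast
  show "iso2 (contr ?G' F) (subg (contr G F) F2)"
    unfolding iso2_def
  proof (rule exI[of _ id], rule exI[of _ id], rule exI[of _ id], intro conjI ballI)
    show "bij_betw id (V (contr ?G' F)) (V (subg (contr G F) F2))"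
      by (simp add: contr_simps KK)
    show "bij_betw id (H (contr ?G' F)) (H (subg (contr G F) F2))"
      by (simp add: contr_simps KK)
    show "bij_betw id (S (contr ?G' F)) (S (subg (contr G F) F2))"
      by (simp add: contr_simps KK)
  next
    fix h assume h: "h \<in> H (contr ?G' F)"
    then have h': "h \<in> H (contr G F)" by (simp add: contr_simps KK)
    then have "h \<notin> \<Union>F" using H_contr[OF G F] by simp
    show "id (nu (contr ?G' F) h) = nu (subg (contr G F) F2) (id h)" by (simp add: contr_simps KK)
    show "id (iota (contr ?G' F) h) = iota (subg (contr G F) F2) (id h)"
      using \<open>h \<notin> \<Union>F\<close> by (simp add: contr_simps)
  next
    fix s assume s: "s \<in> S (contr ?G' F)"
    then have s': "s \<in> S (contr G F)" by (simp add: contr_simps KK)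
    then have "mu G s \<notin> \<Union>F" using S_contr[OF G F] by simp
    show "id (mu (contr ?G' F) s) = mu (subg (contr G F) F2) (id s)" by (simp add: contr_simps)
    show "id (sig1 (contr ?G' F) s) = sig1 (subg (contr G F) F2) (id s)" by (simp add: contr_simps KK)
    show "id (sig2 (contr ?G' F) s) = sig2 (subg (contr G F) F2) (id s)"
      using \<open>mu G s \<notin> \<Union>F\<close> by (simp add: contr_simps)
  qed
qed

lemma adj_mono_sub:
  assumes G: "wf2 G" and X: "X \<subseteq> edges G" and Y: "Y \<subseteq> edges G" and XY: "X \<subseteq> Y"
  shows "adj (subg G X) \<subseteq> adj (subg G Y)"
  unfolding adj_subg[OF G X] adj_subg[OF G Y] using XY by blast

lemma contr_contr_iso:
  assumes G: "wf2 G" and F: "F \<subseteq> edges G" and F2: "F2 \<subseteq> edges (contr G F)"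
  shows "iso2 (contr G (F \<union> F2)) (contr (contr G F) F2)"
proof -
  let ?G1 = "contr G F"
  let ?K = "subg G F" and ?K1 = "subg ?G1 F2" and ?K2 = "subg G (F \<union> F2)"
  let ?m = "\<lambda>u. Min (comp ?K u)"
  note EC = edges_contr_sub[OF G F]
  have FF: "F \<union> F2 \<subseteq> edges G" using subg_contr_iso(1)[OF G F F2] .
  have G1: "wf2 ?G1" using wf2_contr[OF G F] .
  have K: "wf2 ?K" using wf2_subg[OF G F] .
  have K1: "wf2 ?K1" using wf2_subg[OF G1 F2] .
  have K2: "wf2 ?K2" using wf2_subg[OF G FF] .
  note W = wf2D[OF G]
  have U2: "\<Union>F2 \<subseteq> H G - \<Union>F" using EC(2) F2 by blast
  have VG1: "V ?G1 \<subseteq> V G" using V_contr_sub[OF G F] .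
  have mK: "\<And>u. u \<in> V G \<Longrightarrow> ?m u \<in> V ?G1 \<and> (u, ?m u) \<in> (adj ?K)\<^sup>*"
  proof -
    fix u assume u: "u \<in> V G"
    have "?m u \<in> comp ?K u" using Min_comp_in[OF K] u by simp
    then show "?m u \<in> V ?G1 \<and> (u, ?m u) \<in> (adj ?K)\<^sup>*" unfolding contr_simps comps_def comp_def
      using u by auto
  qed
  have aKK2: "adj ?K \<subseteq> adj ?K2" using adj_mono_sub[OF G F FF] by blast
  have rKK2: "\<And>x y. (x, y) \<in> (adj ?K)\<^sup>* \<Longrightarrow> (x, y) \<in> (adj ?K2)\<^sup>*"
    using aKK2 rtrancl_mono by blast
  have adjK1: "adj ?K1 = {(?m (nu G h), ?m (nu G (iota G h))) | h. h \<in> \<Union>F2}"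
    unfolding adj_subg[OF G1 F2] by (simp add: contr_simps)
  have adjK2: "adj ?K2 = adj ?K \<union> {(nu G h, nu G (iota G h)) | h. h \<in> \<Union>F2}"
    unfolding adj_subg[OF G FF] adj_subg[OF G F] by blast
  have mK_eq: "\<And>x y. (x, y) \<in> (adj ?K)\<^sup>* \<Longrightarrow> ?m x = ?m y"
    using comp_eq[OF K] by metis
  have fwd: "\<And>u w. (u, w) \<in> (adj ?K2)\<^sup>* \<Longrightarrow> (?m u, ?m w) \<in> (adj ?K1)\<^sup>*"
  proof -
    fix u w assume "(u, w) \<in> (adj ?K2)\<^sup>*"
    then show "(?m u, ?m w) \<in> (adj ?K1)\<^sup>*"
    proof (induction rule: rtrancl_induct)
      case base then show ?case by simp
    next
      case (step y z)
      have "?m y = ?m z \<or> (?m y, ?m z) \<in> adj ?K1"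
      proof (cases "(y, z) \<in> adj ?K")
        case True then show ?thesis using mK_eq by blast
      next
        case False
        then obtain h where h: "h \<in> \<Union>F2" "y = nu G h" "z = nu G (iota G h)" using step(2) adjK2 by blast
        then show ?thesis unfolding adjK1 by blast
      qed
      then show ?case using step.IH by (metis rtrancl.rtrancl_into_rtrancl)
    qed
  qed
  have bwd0: "\<And>u x. u \<in> V G \<Longrightarrow> (?m u, x) \<in> (adj ?K1)\<^sup>* \<Longrightarrow> (u, x) \<in> (adj ?K2)\<^sup>*"
  proof -
    fix u x assume u: "u \<in> V G" and r: "(?m u, x) \<in> (adj ?K1)\<^sup>*"
    from r show "(u, x) \<in> (adj ?K2)\<^sup>*"
    proof (induction rule: rtrancl_induct)
      case base then show ?case using mK[OF u] rKK2 by blast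
    next
      case (step y z)
      obtain h where h: "h \<in> \<Union>F2" "y = ?m (nu G h)" "z = ?m (nu G (iota G h))"
        using step(2) adjK1 by blast
      have hH: "h \<in> H G" "iota G h \<in> H G" using U2 h(1) W by auto
      have nv: "nu G h \<in> V G" "nu G (iota G h) \<in> V G" using hH W by auto
      have "(y, nu G h) \<in> (adj ?K2)\<^sup>*"
        using mK[OF nv(1)] adj_rtrancl_sym[OF K] rKK2 h(2) by blast
      moreover have "(nu G h, nu G (iota G h)) \<in> adj ?K2" using adjK2 h(1) by blast
      moreover have "(nu G (iota G h), z) \<in> (adj ?K2)\<^sup>*" using mK[OF nv(2)] rKK2 h(3) by blast
      ultimately show ?case using step.IH
        by (meson rtrancl.rtrancl_into_rtrancl rtrancl_trans)
    qed
  qed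
  have iffr: "\<And>u w. u \<in> V G \<Longrightarrow> w \<in> V G \<Longrightarrow> (?m u, ?m w) \<in> (adj ?K1)\<^sup>* \<longleftrightarrow> (u, w) \<in> (adj ?K2)\<^sup>*"
  proof
    fix u w assume u: "u \<in> V G" and w: "w \<in> V G"
    assume "(?m u, ?m w) \<in> (adj ?K1)\<^sup>*"
    then have "(u, ?m w) \<in> (adj ?K2)\<^sup>*" using bwd0[OF u] by blast
    moreover have "(?m w, w) \<in> (adj ?K2)\<^sup>*" using mK[OF w] adj_rtrancl_sym[OF K] rKK2 by blast
    ultimately show "(u, w) \<in> (adj ?K2)\<^sup>*" by (meson rtrancl_trans)
  next
    fix u w assume "(u, w) \<in> (adj ?K2)\<^sup>*"
    then show "(?m u, ?m w) \<in> (adj ?K1)\<^sup>*" using fwd by blast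
  qed
  have HC2: "H (contr G (F \<union> F2)) = H (contr ?G1 F2)"
    unfolding H_contr[OF G FF] H_contr[OF G1 F2] H_contr[OF G F] by auto
  have SC2: "S (contr G (F \<union> F2)) = S (contr ?G1 F2)"
    unfolding S_contr[OF G FF] S_contr[OF G1 F2] S_contr[OF G F] by (auto simp: contr_simps)
  show ?thesis
  proof (rule contr_crit[OF G FF, where fH = id and fS = id and psi = "\<lambda>u. Min (comp ?K1 (?m u))"])
    show "bij_betw id (H (contr G (F \<union> F2))) (H (contr ?G1 F2))" unfolding HC2 by simp
    show "bij_betw id (S (contr G (F \<union> F2))) (S (contr ?G1 F2))" unfolding SC2 by simp
  next
    fix u assume u: "u \<in> V G"
    then have "?m u \<in> V ?K1" using mK by simp
    then show "Min (comp ?K1 (?m u)) \<in> V (contr ?G1 F2)" unfolding contr_simps(1)[of ?G1 F2] comps_def by simp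
  next
    fix c assume "c \<in> V (contr ?G1 F2)"
    then obtain v where v: "v \<in> V ?G1" "c = Min (comp ?K1 v)" unfolding contr_simps(1)[of ?G1 F2] comps_def by auto
    then obtain u where "u \<in> V G" "v = ?m u" unfolding contr_simps comps_def by auto
    then show "\<exists>u\<in>V G. Min (comp ?K1 (?m u)) = c" using v by blast
  next
    fix u w assume u: "u \<in> V G" and w: "w \<in> V G"
    have mu: "?m u \<in> V ?K1" "?m w \<in> V ?K1" using mK u w by auto
    have "Min (comp ?K1 (?m u)) = Min (comp ?K1 (?m w)) \<longleftrightarrow> comp ?K1 (?m u) = comp ?K1 (?m w)"
      using comp_Min[OF K1 mu(1)] comp_Min[OF K1 mu(2)] by metis
    also have "\<dots> \<longleftrightarrow> (?m u, ?m w) \<in> (adj ?K1)\<^sup>*" using comp_eq_iff[OF K1 mu] .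
    also have "\<dots> \<longleftrightarrow> (u, w) \<in> (adj ?K2)\<^sup>*" using iffr[OF u w] .
    finally show "Min (comp ?K1 (?m u)) = Min (comp ?K1 (?m w)) \<longleftrightarrow> (u, w) \<in> (adj ?K2)\<^sup>*" .
  next
    fix h assume "h \<in> H (contr G (F \<union> F2))"
    show "nu (contr ?G1 F2) (id h) = Min (comp ?K1 (?m (nu G h)))" by (simp add: contr_simps)
    show "id (iota G h) = iota (contr ?G1 F2) (id h)" by (simp add: contr_simps)
  next
    fix s assume sC: "s \<in> S (contr G (F \<union> F2))"
    show "id (mu G s) = mu (contr ?G1 F2) (id s)" by (simp add: contr_simps)
    show "id (sig2 G s) = sig2 (contr ?G1 F2) (id s)" by (simp add: contr_simps)
    have s: "s \<in> S G" "mu G s \<notin> \<Union>F" "mu G s \<notin> \<Union>F2" using sC S_contr[OF G FF] by auto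
    have iK: "invK ?K" "invK ?K1" "invK ?K2" using K K1 K2 wf2_invK by auto
    have "s \<in> S (contr ?G1 F2)" using sC SC2 by simp
    then have "s \<in> S ?G1 \<and> sig2 ?K1 s = s" unfolding contr_simps(3)[of ?G1 F2] by blast
    then have sK1: "s \<in> S ?K1" "sig2 ?K1 s = s" by simp_all
    have sK2: "s \<in> S ?K2" "sig2 ?K2 s = s" using s by auto
    have P: "faceP ?K1 s (fend ?K1 s)" by (rule fend_P[OF iK(2) sK1])
    then have t: "fend ?K1 s \<in> S ?G1" "fend ?K1 s \<noteq> s" "sig2 ?K1 (fend ?K1 s) = fend ?K1 s"
      "(s, fend ?K1 s) \<in> (fR ?K1)\<^sup>*" unfolding faceP_def by auto
    have tS: "fend ?K1 s \<in> S G" "mu G (fend ?K1 s) \<notin> \<Union>F" using t(1) S_contr[OF G F] by auto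
    have t2: "mu G (fend ?K1 s) \<notin> \<Union>F2"
    proof
      assume a: "mu G (fend ?K1 s) \<in> \<Union>F2"
      then have "sig2 G (fend ?K1 s) = fend ?K1 s" using t(3) by (simp add: contr_simps)
      then have "iota G (mu G (fend ?K1 s)) = mu G (fend ?K1 s)" using W(15)[OF tS(1)] by simp
      moreover have "mu G (fend ?K1 s) \<in> H G" using W(7)[OF tS(1)] .
      ultimately show False using a edgesU(3)[OF G FF, of "mu G (fend ?K1 s)"] by auto
    qed
    have step: "\<And>x y. (x, y) \<in> fR ?K1 \<Longrightarrow> (x, y) \<in> (fR ?K2)\<^sup>*"
    proof -
      fix x y assume xy: "(x, y) \<in> fR ?K1"
      then have x0: "x \<in> S ?K1" and y: "y = sig1 ?K1 x \<or> y = sig2 ?K1 x" unfolding fR_def by blast+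
      have x: "x \<in> S ?G1" using x0 by simp
      have xS: "x \<in> S G" "mu G x \<notin> \<Union>F" using x S_contr[OF G F] by auto
      show "(x, y) \<in> (fR ?K2)\<^sup>*"
      proof (cases "y = sig1 ?K1 x")
        case True
        then have yy: "y = fend ?K x" by (simp add: contr_simps)
        have sK: "x \<in> S ?K" "sig2 ?K x = x" using xS by auto
        have "faceP ?K x (fend ?K x)" by (rule fend_P[OF iK(1) sK])
        then have r: "(x, fend ?K x) \<in> (fR ?K)\<^sup>*" unfolding faceP_def by simp
        have "fR ?K \<subseteq> (fR ?K2)\<^sup>*"
        proof
          fix p assume "p \<in> fR ?K"
          then obtain a b where ab: "p = (a, b)" "a \<in> S G" "b = sig1 G a \<or> b = sig2 ?K a"
            unfolding fR_def by auto
          show "p \<in> (fR ?K2)\<^sup>*"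
          proof (cases "b = sig1 G a")
            case True then show ?thesis using ab unfolding fR_def by auto
          next
            case False
            then have b: "b = sig2 ?K a" using ab by blast
            show ?thesis
            proof (cases "mu G a \<in> \<Union>F")
              case True
              then have "b = sig2 ?K2 a" using b by simp
              then show ?thesis using ab unfolding fR_def by auto
            next
              case False
              then show ?thesis using ab b by simp
            qed
          qed
        qed
        then have "(fR ?K)\<^sup>* \<subseteq> (fR ?K2)\<^sup>*" by (metis rtrancl_subset_rtrancl)
        then show ?thesis using r yy by blast
      next
        case False
        then have yy: "y = sig2 ?K1 x" using y by blast
        show ?thesis
        proof (cases "mu G x \<in> \<Union>F2")
          case True
          then have "y = sig2 ?K2 x" using yy by (simp add: contr_simps)
          then show ?thesis using xS unfolding fR_def by auto
        next
          case False
          then have "y = x" using yy by (simp add: contr_simps)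
          then show ?thesis by simp
        qed
      qed
    qed
    have r2: "(s, fend ?K1 s) \<in> (fR ?K2)\<^sup>*"
      using t(4)
    proof (induction rule: rtrancl_induct)
      case base then show ?case by simp
    next
      case (step y z)
      then show ?case using \<open>\<And>x y. (x, y) \<in> fR ?K1 \<Longrightarrow> (x, y) \<in> (fR ?K2)\<^sup>*\<close>[OF step(2)] by (meson rtrancl_trans)
    qed
    have "faceP ?K2 s (fend ?K1 s)"
      unfolding faceP_def using tS t(2) t2 r2 by auto
    then have "fend ?K2 s = fend ?K1 s" using fend_eq[OF iK(3) sK2] by blast
    then show "id (fend ?K2 s) = sig1 (contr ?G1 F2) (id s)" by (simp add: contr_simps)
  qed
qed



definition goodV :: "graph1 set set \<Rightarrow> graph2 \<Rightarrow> bool" where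
  "goodV VV G \<longleftrightarrow> (\<forall>v\<in>V G. ucls1 (vgraph G v) \<in> VV)"

lemma wf1_vgraph: assumes G: "wf2 G" shows "wf1 (vgraph G v)"
  using wf2D[OF G] unfolding wf1_def vgraph_def by auto

lemma isom_vgraph:
  assumes m: "isom A B fV fH fS" and A: "wf2 A" and v: "v \<in> V A"
  shows "iso1 (vgraph A v) (vgraph B (fV v))"
proof -
  note M = isomD[OF m] and W = wf2D[OF A]
  have injV: "inj_on fV (V A)" using M(1) bij_betw_def by blast
  have eqv: "\<And>h. h \<in> H A \<Longrightarrow> nu B (fH h) = fV v \<longleftrightarrow> nu A h = v"
    using M(4) W(4) injV v by (metis inj_onD)
  have eqs: "\<And>s. s \<in> S A \<Longrightarrow> nu B (mu B (fS s)) = fV v \<longleftrightarrow> nu A (mu A s) = v"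
    using M(6) eqv W(7) by metis
  show ?thesis unfolding iso1_def vgraph_def
  proof (rule exI[of _ fH], rule exI[of _ fS], intro conjI ballI)
    show "bij_betw fH (V1 \<lparr>V1 = {h \<in> H A. nu A h = v}, H1 = {s \<in> S A. nu A (mu A s) = v}, nu1 = mu A, iota1 = sig1 A\<rparr>)
      (V1 \<lparr>V1 = {h \<in> H B. nu B h = fV v}, H1 = {s \<in> S B. nu B (mu B s) = fV v}, nu1 = mu B, iota1 = sig1 B\<rparr>)"
      using bij_betw_restrict_pred[OF M(2), of "\<lambda>y. nu B y = fV v" "\<lambda>h. nu A h = v"] eqv by simp
    show "bij_betw fS (H1 \<lparr>V1 = {h \<in> H A. nu A h = v}, H1 = {s \<in> S A. nu A (mu A s) = v}, nu1 = mu A, iota1 = sig1 A\<rparr>)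
      (H1 \<lparr>V1 = {h \<in> H B. nu B h = fV v}, H1 = {s \<in> S B. nu B (mu B s) = fV v}, nu1 = mu B, iota1 = sig1 B\<rparr>)"
      using bij_betw_restrict_pred[OF M(3), of "\<lambda>y. nu B (mu B y) = fV v" "\<lambda>s. nu A (mu A s) = v"] eqs by simp
  next
    fix s assume "s \<in> H1 \<lparr>V1 = {h \<in> H A. nu A h = v}, H1 = {s \<in> S A. nu A (mu A s) = v}, nu1 = mu A, iota1 = sig1 A\<rparr>"
    then have s: "s \<in> S A" by simp
    show "fH (nu1 \<lparr>V1 = {h \<in> H A. nu A h = v}, H1 = {s \<in> S A. nu A (mu A s) = v}, nu1 = mu A, iota1 = sig1 A\<rparr> s) =
         nu1 \<lparr>V1 = {h \<in> H B. nu B h = fV v}, H1 = {s \<in> S B. nu B (mu B s) = fV v}, nu1 = mu B, iota1 = sig1 B\<rparr> (fS s)"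
      using M(6)[OF s] by simp
    show "fS (iota1 \<lparr>V1 = {h \<in> H A. nu A h = v}, H1 = {s \<in> S A. nu A (mu A s) = v}, nu1 = mu A, iota1 = sig1 A\<rparr> s) =
         iota1 \<lparr>V1 = {h \<in> H B. nu B h = fV v}, H1 = {s \<in> S B. nu B (mu B s) = fV v}, nu1 = mu B, iota1 = sig1 B\<rparr> (fS s)"
      using M(7)[OF s] by simp
  qed
qed

lemma goodV_iso:
  assumes i: "iso2 A B" and A: "wf2 A" and g: "goodV VV A"
  shows "goodV VV B"
  unfolding goodV_def
proof
  obtain fV fH fS where m: "isom A B fV fH fS" using i iso2_isom by blast
  fix v' assume "v' \<in> V B"
  then obtain v where v: "v \<in> V A" "v' = fV v" using isomD(1)[OF m] by (metis bij_betw_imp_surj_on imageE)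
  have "ucls1 (vgraph B v') = ucls1 (vgraph A v)"
    using ucls1_eq[OF wf1_vgraph[OF A] isom_vgraph[OF m A v(1)]] v by simp
  then show "ucls1 (vgraph B v') \<in> VV" using g v unfolding goodV_def by simp
qed

lemma vgraph_subg[simp]: "vgraph (subg G F) v = vgraph G v"
  unfolding vgraph_def by simp

lemma goodV_subg[simp]: "goodV VV (subg G F) = goodV VV G"
  unfolding goodV_def by simp

lemma G2_iff: assumes G: "wf2 G" shows "ucls G \<in> G2 VV \<longleftrightarrow> goodV VV G"
proof
  assume "ucls G \<in> G2 VV"
  then obtain G0 where G0: "ucls G = ucls G0" "wf2 G0" "goodV VV G0" unfolding G2_def goodV_def by blast
  then have "iso2 G0 G" using ucls_eq_iff[OF G0(2) G] by simp
  then show "goodV VV G" using goodV_iso G0 by blast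
next
  assume "goodV VV G" then show "ucls G \<in> G2 VV" using G unfolding G2_def goodV_def by blast
qed

lemma cclosure_alt: "cclosure VV = {ucls (contr G F) | G F. wf2 G \<and> goodV VV G \<and> F \<subseteq> edges G}"
  unfolding cclosure_def using G2_iff by blast



lemma mix0[simp]: "mix f g (2*n) = 2 * f n" unfolding mix_def by simp
lemma mix1[simp]: "mix f g (Suc (2*n)) = Suc (2 * g n)" unfolding mix_def by simp

lemma dlab0[simp]: "2*n \<in> dlab A B \<longleftrightarrow> n \<in> A" unfolding dlab_def by (auto; presburger)
lemma dlab1[simp]: "Suc (2*n) \<in> dlab A B \<longleftrightarrow> n \<in> B" unfolding dlab_def by (auto; presburger)

lemma dlab_cases:
  assumes "x \<in> dlab A B"
  obtains n where "n \<in> A" "x = 2*n" | n where "n \<in> B" "x = Suc (2*n)"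
  using assms unfolding dlab_def by auto

lemma nat_cases2: obtains n where "x = 2*n" | n where "x = Suc (2*n)"
  by (metis oddE evenE Suc_eq_plus1)

lemma du_simps[simp]:
  "V (du A B) = dlab (V A) (V B)" "H (du A B) = dlab (H A) (H B)" "S (du A B) = dlab (S A) (S B)"
  "nu (du A B) = mix (nu A) (nu B)" "iota (du A B) = mix (iota A) (iota B)" "mu (du A B) = mix (mu A) (mu B)"
  "sig1 (du A B) = mix (sig1 A) (sig1 B)" "sig2 (du A B) = mix (sig2 A) (sig2 B)"
  unfolding du_def by simp_all

lemma finite_dlab: "finite A \<Longrightarrow> finite B \<Longrightarrow> finite (dlab A B)"
  unfolding dlab_def by simp

lemma wf2_du: assumes A: "wf2 A" and B: "wf2 B" shows "wf2 (du A B)"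
proof (rule wf2I)
  note WA = wf2D[OF A] and WB = wf2D[OF B]
  show "finite (V (du A B))" "finite (H (du A B))" "finite (S (du A B))"
    using WA WB by (simp_all add: finite_dlab)
  fix h assume "h \<in> H (du A B)"
  then have h: "h \<in> dlab (H A) (H B)" by simp
  show "nu (du A B) h \<in> V (du A B)" using h by (cases rule: dlab_cases) (use WA WB in auto)
  show "iota (du A B) h \<in> H (du A B)" using h by (cases rule: dlab_cases) (use WA WB in auto)
  show "iota (du A B) (iota (du A B) h) = h" using h by (cases rule: dlab_cases) (use WA WB in auto)
next
  note WA = wf2D[OF A] and WB = wf2D[OF B]
  fix s assume "s \<in> S (du A B)"
  then have s: "s \<in> dlab (S A) (S B)" by simp
  show "mu (du A B) s \<in> H (du A B)" using s by (cases rule: dlab_cases) (use WA WB in auto)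
  show "sig1 (du A B) s \<in> S (du A B)" using s by (cases rule: dlab_cases) (use WA WB in auto)
  show "sig1 (du A B) (sig1 (du A B) s) = s" using s by (cases rule: dlab_cases) (use WA WB in auto)
  show "sig1 (du A B) s \<noteq> s" using s by (cases rule: dlab_cases) (use WA WB in auto)
  show "nu (du A B) (mu (du A B) (sig1 (du A B) s)) = nu (du A B) (mu (du A B) s)"
    using s by (cases rule: dlab_cases) (use WA WB in auto)
  show "sig2 (du A B) s \<in> S (du A B)" using s by (cases rule: dlab_cases) (use WA WB in auto)
  show "sig2 (du A B) (sig2 (du A B) s) = s" using s by (cases rule: dlab_cases) (use WA WB in auto)
  show "iota (du A B) (mu (du A B) s) = mu (du A B) (sig2 (du A B) s)"
    using s by (cases rule: dlab_cases) (use WA WB in auto)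
  show "sig2 (du A B) s = s \<longleftrightarrow> iota (du A B) (mu (du A B) s) = mu (du A B) s"
    using s by (cases rule: dlab_cases) (use WA WB in auto)
qed

lemma bij_mix:
  assumes f: "bij_betw f A A'" and g: "bij_betw g B B'"
  shows "bij_betw (mix f g) (dlab A B) (dlab A' B')"
  unfolding bij_betw_def
proof
  have fi: "inj_on f A" and gi: "inj_on g B" using f g bij_betw_def by auto
  show "inj_on (mix f g) (dlab A B)"
  proof (rule inj_onI)
    fix x y assume x: "x \<in> dlab A B" and y: "y \<in> dlab A B" and e: "mix f g x = mix f g y"
    from x show "x = y"
    proof (cases rule: dlab_cases)
      case (1 n) note xn = this
      from y show ?thesis
      proof (cases rule: dlab_cases)
        case (1 m) then show ?thesis using xn e fi by (auto dest: inj_onD)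
      next
        case (2 m) then show ?thesis using xn e by simp presburger
      qed
    next
      case (2 n) note xn = this
      from y show ?thesis
      proof (cases rule: dlab_cases)
        case (1 m) then show ?thesis using xn e by simp presburger
      next
        case (2 m) then show ?thesis using xn e gi by (auto dest: inj_onD)
      qed
    qed
  qed
  show "mix f g ` dlab A B = dlab A' B'"
  proof
    show "mix f g ` dlab A B \<subseteq> dlab A' B'"
    proof
      fix y assume "y \<in> mix f g ` dlab A B"
      then obtain x where x: "x \<in> dlab A B" "y = mix f g x" by blast
      from x(1) show "y \<in> dlab A' B'"
        by (cases rule: dlab_cases) (use x f g bij_betw_apply in fastforce)+
    qed
    show "dlab A' B' \<subseteq> mix f g ` dlab A B"
    proof
      fix y assume "y \<in> dlab A' B'"
      then show "y \<in> mix f g ` dlab A B"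
      proof (cases rule: dlab_cases)
        case (1 n)
        then obtain m where "m \<in> A" "n = f m" using f by (metis bij_betw_imp_surj_on imageE)
        then have "y = mix f g (2*m)" "2*m \<in> dlab A B" using 1 by simp_all
        then show ?thesis by blast
      next
        case (2 n)
        then obtain m where "m \<in> B" "n = g m" using g by (metis bij_betw_imp_surj_on imageE)
        then have "y = mix f g (Suc (2*m))" "Suc (2*m) \<in> dlab A B" using 2 by simp_all
        then show ?thesis by blast
      qed
    qed
  qed
qed

lemma isom_du:
  assumes m1: "isom A A' fV fH fS" and m2: "isom B B' gV gH gS"
  shows "isom (du A B) (du A' B') (mix fV gV) (mix fH gH) (mix fS gS)"
  unfolding isom_def
proof (intro conjI ballI)
  note M1 = isomD[OF m1] and M2 = isomD[OF m2]
  show "bij_betw (mix fV gV) (V (du A B)) (V (du A' B'))" using bij_mix[OF M1(1) M2(1)] by simp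
  show "bij_betw (mix fH gH) (H (du A B)) (H (du A' B'))" using bij_mix[OF M1(2) M2(2)] by simp
  show "bij_betw (mix fS gS) (S (du A B)) (S (du A' B'))" using bij_mix[OF M1(3) M2(3)] by simp
next
  note M1 = isomD[OF m1] and M2 = isomD[OF m2]
  fix h assume "h \<in> H (du A B)"
  then have h: "h \<in> dlab (H A) (H B)" by simp
  show "mix fV gV (nu (du A B) h) = nu (du A' B') (mix fH gH h)"
    using h by (cases rule: dlab_cases) (use M1 M2 in auto)
  show "mix fH gH (iota (du A B) h) = iota (du A' B') (mix fH gH h)"
    using h by (cases rule: dlab_cases) (use M1 M2 in auto)
next
  note M1 = isomD[OF m1] and M2 = isomD[OF m2]
  fix s assume "s \<in> S (du A B)"
  then have s: "s \<in> dlab (S A) (S B)" by simp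
  show "mix fH gH (mu (du A B) s) = mu (du A' B') (mix fS gS s)"
    using s by (cases rule: dlab_cases) (use M1 M2 in auto)
  show "mix fS gS (sig1 (du A B) s) = sig1 (du A' B') (mix fS gS s)"
    using s by (cases rule: dlab_cases) (use M1 M2 in auto)
  show "mix fS gS (sig2 (du A B) s) = sig2 (du A' B') (mix fS gS s)"
    using s by (cases rule: dlab_cases) (use M1 M2 in auto)
qed

lemma iso2_du: "iso2 A A' \<Longrightarrow> iso2 B B' \<Longrightarrow> iso2 (du A B) (du A' B')"
  using isom_du iso2_isom by metis

lemma vgraph_du0: assumes A: "wf2 A" and v: "v \<in> V A"
  shows "iso1 (vgraph A v) (vgraph (du A B) (2*v))"
  unfolding iso1_def vgraph_def
proof (rule exI[of _ "\<lambda>n. 2*n"], rule exI[of _ "\<lambda>n. 2*n"], intro conjI ballI)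
  note W = wf2D[OF A]
  show "bij_betw ((*) 2) (V1 \<lparr>V1 = {h \<in> H A. nu A h = v}, H1 = {s \<in> S A. nu A (mu A s) = v}, nu1 = mu A, iota1 = sig1 A\<rparr>)
     (V1 \<lparr>V1 = {h \<in> H (du A B). nu (du A B) h = 2 * v}, H1 = {s \<in> S (du A B). nu (du A B) (mu (du A B) s) = 2 * v},
            nu1 = mu (du A B), iota1 = sig1 (du A B)\<rparr>)"
    unfolding bij_betw_def
  proof
    show "inj_on ((*) (2::nat)) (V1 \<lparr>V1 = {h \<in> H A. nu A h = v}, H1 = {s \<in> S A. nu A (mu A s) = v}, nu1 = mu A, iota1 = sig1 A\<rparr>)"
      by (simp add: inj_on_def)
    show "(*) 2 ` V1 \<lparr>V1 = {h \<in> H A. nu A h = v}, H1 = {s \<in> S A. nu A (mu A s) = v}, nu1 = mu A, iota1 = sig1 A\<rparr> =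
    V1 \<lparr>V1 = {h \<in> H (du A B). nu (du A B) h = 2 * v}, H1 = {s \<in> S (du A B). nu (du A B) (mu (du A B) s) = 2 * v},
            nu1 = mu (du A B), iota1 = sig1 (du A B)\<rparr>"
    proof (rule set_eqI, rule iffI)
      fix x assume "x \<in> (*) 2 ` V1 \<lparr>V1 = {h \<in> H A. nu A h = v}, H1 = {s \<in> S A. nu A (mu A s) = v}, nu1 = mu A, iota1 = sig1 A\<rparr>"
      then show "x \<in> V1 \<lparr>V1 = {h \<in> H (du A B). nu (du A B) h = 2 * v}, H1 = {s \<in> S (du A B). nu (du A B) (mu (du A B) s) = 2 * v},
            nu1 = mu (du A B), iota1 = sig1 (du A B)\<rparr>" by auto
    next
      fix x assume "x \<in> V1 \<lparr>V1 = {h \<in> H (du A B). nu (du A B) h = 2 * v}, H1 = {s \<in> S (du A B). nu (du A B) (mu (du A B) s) = 2 * v},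
            nu1 = mu (du A B), iota1 = sig1 (du A B)\<rparr>"
      then have x: "x \<in> dlab (H A) (H B)" "mix (nu A) (nu B) x = 2*v" by auto
      from x(1) show "x \<in> (*) 2 ` V1 \<lparr>V1 = {h \<in> H A. nu A h = v}, H1 = {s \<in> S A. nu A (mu A s) = v}, nu1 = mu A, iota1 = sig1 A\<rparr>"
      proof (cases rule: dlab_cases)
        case (1 n) then show ?thesis using x(2) by auto
      next
        case (2 n)
        then have "Suc (2 * nu B n) = 2 * v" using x(2) by simp
        then have False by presburger
        then show ?thesis by blast
      qed
    qed
  qed
  show "bij_betw ((*) 2) (H1 \<lparr>V1 = {h \<in> H A. nu A h = v}, H1 = {s \<in> S A. nu A (mu A s) = v}, nu1 = mu A, iota1 = sig1 A\<rparr>)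
     (H1 \<lparr>V1 = {h \<in> H (du A B). nu (du A B) h = 2 * v}, H1 = {s \<in> S (du A B). nu (du A B) (mu (du A B) s) = 2 * v},
            nu1 = mu (du A B), iota1 = sig1 (du A B)\<rparr>)"
    unfolding bij_betw_def
  proof
    show "inj_on ((*) (2::nat)) (H1 \<lparr>V1 = {h \<in> H A. nu A h = v}, H1 = {s \<in> S A. nu A (mu A s) = v}, nu1 = mu A, iota1 = sig1 A\<rparr>)"
      by (simp add: inj_on_def)
    show "(*) 2 ` H1 \<lparr>V1 = {h \<in> H A. nu A h = v}, H1 = {s \<in> S A. nu A (mu A s) = v}, nu1 = mu A, iota1 = sig1 A\<rparr> =
    H1 \<lparr>V1 = {h \<in> H (du A B). nu (du A B) h = 2 * v}, H1 = {s \<in> S (du A B). nu (du A B) (mu (du A B) s) = 2 * v},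
            nu1 = mu (du A B), iota1 = sig1 (du A B)\<rparr>"
    proof (rule set_eqI, rule iffI)
      fix x assume "x \<in> (*) 2 ` H1 \<lparr>V1 = {h \<in> H A. nu A h = v}, H1 = {s \<in> S A. nu A (mu A s) = v}, nu1 = mu A, iota1 = sig1 A\<rparr>"
      then show "x \<in> H1 \<lparr>V1 = {h \<in> H (du A B). nu (du A B) h = 2 * v}, H1 = {s \<in> S (du A B). nu (du A B) (mu (du A B) s) = 2 * v},
            nu1 = mu (du A B), iota1 = sig1 (du A B)\<rparr>" by auto
    next
      fix x assume "x \<in> H1 \<lparr>V1 = {h \<in> H (du A B). nu (du A B) h = 2 * v}, H1 = {s \<in> S (du A B). nu (du A B) (mu (du A B) s) = 2 * v},
            nu1 = mu (du A B), iota1 = sig1 (du A B)\<rparr>"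
      then have x: "x \<in> dlab (S A) (S B)" "mix (nu A) (nu B) (mix (mu A) (mu B) x) = 2*v" by auto
      from x(1) show "x \<in> (*) 2 ` H1 \<lparr>V1 = {h \<in> H A. nu A h = v}, H1 = {s \<in> S A. nu A (mu A s) = v}, nu1 = mu A, iota1 = sig1 A\<rparr>"
      proof (cases rule: dlab_cases)
        case (1 n) then show ?thesis using x(2) by auto
      next
        case (2 n)
        then have "Suc (2 * nu B (mu B n)) = 2 * v" using x(2) by simp
        then have False by presburger
        then show ?thesis by blast
      qed
    qed
  qed
qed auto

lemma vgraph_du1: assumes A: "wf2 B" and v: "v \<in> V B"
  shows "iso1 (vgraph B v) (vgraph (du A B) (Suc (2*v)))"
  unfolding iso1_def vgraph_def
proof (rule exI[of _ "\<lambda>n. Suc (2*n)"], rule exI[of _ "\<lambda>n. Suc (2*n)"], intro conjI ballI)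
  note W = wf2D[OF A]
  show "bij_betw (\<lambda>n. Suc (2*n)) (V1 \<lparr>V1 = {h \<in> H B. nu B h = v}, H1 = {s \<in> S B. nu B (mu B s) = v}, nu1 = mu B, iota1 = sig1 B\<rparr>)
     (V1 \<lparr>V1 = {h \<in> H (du A B). nu (du A B) h = Suc (2 * v)}, H1 = {s \<in> S (du A B). nu (du A B) (mu (du A B) s) = Suc (2 * v)},
            nu1 = mu (du A B), iota1 = sig1 (du A B)\<rparr>)"
    unfolding bij_betw_def
  proof
    show "inj_on (\<lambda>n::nat. Suc (2*n)) (V1 \<lparr>V1 = {h \<in> H B. nu B h = v}, H1 = {s \<in> S B. nu B (mu B s) = v}, nu1 = mu B, iota1 = sig1 B\<rparr>)"
      by (simp add: inj_on_def)
    show "(\<lambda>n. Suc (2*n)) ` V1 \<lparr>V1 = {h \<in> H B. nu B h = v}, H1 = {s \<in> S B. nu B (mu B s) = v}, nu1 = mu B, iota1 = sig1 B\<rparr> =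
    V1 \<lparr>V1 = {h \<in> H (du A B). nu (du A B) h = Suc (2 * v)}, H1 = {s \<in> S (du A B). nu (du A B) (mu (du A B) s) = Suc (2 * v)},
            nu1 = mu (du A B), iota1 = sig1 (du A B)\<rparr>"
    proof (rule set_eqI, rule iffI)
      fix x assume "x \<in> (\<lambda>n. Suc (2*n)) ` V1 \<lparr>V1 = {h \<in> H B. nu B h = v}, H1 = {s \<in> S B. nu B (mu B s) = v}, nu1 = mu B, iota1 = sig1 B\<rparr>"
      then show "x \<in> V1 \<lparr>V1 = {h \<in> H (du A B). nu (du A B) h = Suc (2 * v)}, H1 = {s \<in> S (du A B). nu (du A B) (mu (du A B) s) = Suc (2 * v)},
            nu1 = mu (du A B), iota1 = sig1 (du A B)\<rparr>" by auto
    next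
      fix x assume "x \<in> V1 \<lparr>V1 = {h \<in> H (du A B). nu (du A B) h = Suc (2 * v)}, H1 = {s \<in> S (du A B). nu (du A B) (mu (du A B) s) = Suc (2 * v)},
            nu1 = mu (du A B), iota1 = sig1 (du A B)\<rparr>"
      then have x: "x \<in> dlab (H A) (H B)" "mix (nu A) (nu B) x = Suc (2*v)" by auto
      from x(1) show "x \<in> (\<lambda>n. Suc (2*n)) ` V1 \<lparr>V1 = {h \<in> H B. nu B h = v}, H1 = {s \<in> S B. nu B (mu B s) = v}, nu1 = mu B, iota1 = sig1 B\<rparr>"
      proof (cases rule: dlab_cases)
        case (2 n) then show ?thesis using x(2) by auto
      next
        case (1 n)
        then have "2 * nu A n = Suc (2 * v)" using x(2) by simp
        then have False by presburger
        then show ?thesis by blast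
      qed
    qed
  qed
  show "bij_betw (\<lambda>n. Suc (2*n)) (H1 \<lparr>V1 = {h \<in> H B. nu B h = v}, H1 = {s \<in> S B. nu B (mu B s) = v}, nu1 = mu B, iota1 = sig1 B\<rparr>)
     (H1 \<lparr>V1 = {h \<in> H (du A B). nu (du A B) h = Suc (2 * v)}, H1 = {s \<in> S (du A B). nu (du A B) (mu (du A B) s) = Suc (2 * v)},
            nu1 = mu (du A B), iota1 = sig1 (du A B)\<rparr>)"
    unfolding bij_betw_def
  proof
    show "inj_on (\<lambda>n::nat. Suc (2*n)) (H1 \<lparr>V1 = {h \<in> H B. nu B h = v}, H1 = {s \<in> S B. nu B (mu B s) = v}, nu1 = mu B, iota1 = sig1 B\<rparr>)"
      by (simp add: inj_on_def)
    show "(\<lambda>n. Suc (2*n)) ` H1 \<lparr>V1 = {h \<in> H B. nu B h = v}, H1 = {s \<in> S B. nu B (mu B s) = v}, nu1 = mu B, iota1 = sig1 B\<rparr> =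
    H1 \<lparr>V1 = {h \<in> H (du A B). nu (du A B) h = Suc (2 * v)}, H1 = {s \<in> S (du A B). nu (du A B) (mu (du A B) s) = Suc (2 * v)},
            nu1 = mu (du A B), iota1 = sig1 (du A B)\<rparr>"
    proof (rule set_eqI, rule iffI)
      fix x assume "x \<in> (\<lambda>n. Suc (2*n)) ` H1 \<lparr>V1 = {h \<in> H B. nu B h = v}, H1 = {s \<in> S B. nu B (mu B s) = v}, nu1 = mu B, iota1 = sig1 B\<rparr>"
      then show "x \<in> H1 \<lparr>V1 = {h \<in> H (du A B). nu (du A B) h = Suc (2 * v)}, H1 = {s \<in> S (du A B). nu (du A B) (mu (du A B) s) = Suc (2 * v)},
            nu1 = mu (du A B), iota1 = sig1 (du A B)\<rparr>" by auto
    next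
      fix x assume "x \<in> H1 \<lparr>V1 = {h \<in> H (du A B). nu (du A B) h = Suc (2 * v)}, H1 = {s \<in> S (du A B). nu (du A B) (mu (du A B) s) = Suc (2 * v)},
            nu1 = mu (du A B), iota1 = sig1 (du A B)\<rparr>"
      then have x: "x \<in> dlab (S A) (S B)" "mix (nu A) (nu B) (mix (mu A) (mu B) x) = Suc (2*v)" by auto
      from x(1) show "x \<in> (\<lambda>n. Suc (2*n)) ` H1 \<lparr>V1 = {h \<in> H B. nu B h = v}, H1 = {s \<in> S B. nu B (mu B s) = v}, nu1 = mu B, iota1 = sig1 B\<rparr>"
      proof (cases rule: dlab_cases)
        case (2 n) then show ?thesis using x(2) by auto
      next
        case (1 n)
        then have "2 * nu A (mu A n) = Suc (2 * v)" using x(2) by simp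
        then have False by presburger
        then show ?thesis by blast
      qed
    qed
  qed
qed auto

lemma goodV_du:
  assumes A: "wf2 A" and B: "wf2 B" and gA: "goodV VV A" and gB: "goodV VV B"
  shows "goodV VV (du A B)"
  unfolding goodV_def
proof
  fix x assume "x \<in> V (du A B)"
  then have "x \<in> dlab (V A) (V B)" by simp
  then show "ucls1 (vgraph (du A B) x) \<in> VV"
  proof (cases rule: dlab_cases)
    case (1 n)
    then show ?thesis using ucls1_eq[OF wf1_vgraph[OF A] vgraph_du0[OF A 1(1)]] gA unfolding goodV_def by simp
  next
    case (2 n)
    then show ?thesis using ucls1_eq[OF wf1_vgraph[OF B] vgraph_du1[OF B 2(1)]] gB unfolding goodV_def by simp
  qed
qed



definition e0 :: "nat \<Rightarrow> nat" where "e0 n = 2*n"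
definition e1 :: "nat \<Rightarrow> nat" where "e1 n = Suc (2*n)"

definition duF :: "nat set set \<Rightarrow> nat set set \<Rightarrow> nat set set" where
  "duF FA FB = (\<lambda>e. e0 ` e) ` FA \<union> (\<lambda>e. e1 ` e) ` FB"

lemma memU0[simp]: "2*n \<in> \<Union>(duF FA FB) \<longleftrightarrow> n \<in> \<Union>FA"
  unfolding duF_def e0_def e1_def by (auto; presburger)
lemma memU1[simp]: "Suc (2*n) \<in> \<Union>(duF FA FB) \<longleftrightarrow> n \<in> \<Union>FB"
  unfolding duF_def e0_def e1_def by (auto; presburger)

lemma duF_edges:
  assumes A: "wf2 A" and B: "wf2 B" and FA: "FA \<subseteq> edges A" and FB: "FB \<subseteq> edges B"
  shows "duF FA FB \<subseteq> edges (du A B)"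
proof
  fix e' assume "e' \<in> duF FA FB"
  then consider (a) e where "e \<in> FA" "e' = e0 ` e" | (b) e where "e \<in> FB" "e' = e1 ` e"
    unfolding duF_def by blast
  then show "e' \<in> edges (du A B)"
  proof cases
    case a
    then obtain h where h: "e = {h, iota A h}" "h \<in> H A" "iota A h \<noteq> h" using FA unfolding edges_def by blast
    have "e' = {2*h, iota (du A B) (2*h)}" "2*h \<in> H (du A B)" "iota (du A B) (2*h) \<noteq> 2*h"
      using a h by (auto simp: e0_def)
    then show ?thesis unfolding edges_def by blast
  next
    case b
    then obtain h where h: "e = {h, iota B h}" "h \<in> H B" "iota B h \<noteq> h" using FB unfolding edges_def by blast
    have "e' = {Suc (2*h), iota (du A B) (Suc (2*h))}" "Suc (2*h) \<in> H (du A B)" "iota (du A B) (Suc (2*h)) \<noteq> Suc (2*h)"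
      using b h by (auto simp: e1_def)
    then show ?thesis unfolding edges_def by blast
  qed
qed

lemma subg_du: "subg (du A B) (duF FA FB) = du (subg A FA) (subg B FB)"
proof -
  have i: "(\<lambda>h. if h \<in> \<Union>(duF FA FB) then iota (du A B) h else h) = iota (du (subg A FA) (subg B FB))"
  proof
    fix h show "(if h \<in> \<Union>(duF FA FB) then iota (du A B) h else h) = iota (du (subg A FA) (subg B FB)) h"
      by (cases h rule: nat_cases2) (auto simp del: Union_iff)
  qed
  have s: "(\<lambda>s. if mu (du A B) s \<in> \<Union>(duF FA FB) then sig2 (du A B) s else s) = sig2 (du (subg A FA) (subg B FB))"
  proof
    fix s show "(if mu (du A B) s \<in> \<Union>(duF FA FB) then sig2 (du A B) s else s) = sig2 (du (subg A FA) (subg B FB)) s"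
      by (cases s rule: nat_cases2) (auto simp del: Union_iff)
  qed
  show ?thesis using i s unfolding subg_def[of "du A B"] by (simp add: du_def subg_def)
qed

lemma adj_du: "adj (du A B) = map_prod e0 e0 ` adj A \<union> map_prod e1 e1 ` adj B"
proof
  show "adj (du A B) \<subseteq> map_prod e0 e0 ` adj A \<union> map_prod e1 e1 ` adj B"
  proof
    fix p assume "p \<in> adj (du A B)"
    then obtain h where h: "h \<in> dlab (H A) (H B)" "mix (iota A) (iota B) h \<noteq> h"
      "p = (mix (nu A) (nu B) h, mix (nu A) (nu B) (mix (iota A) (iota B) h))" unfolding adj_def by auto
    from h(1) show "p \<in> map_prod e0 e0 ` adj A \<union> map_prod e1 e1 ` adj B"
    proof (cases rule: dlab_cases)
      case (1 n)
      then have "(nu A n, nu A (iota A n)) \<in> adj A" using h unfolding adj_def by auto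
      moreover have "p = map_prod e0 e0 (nu A n, nu A (iota A n))" using h 1 by (simp add: e0_def)
      ultimately show ?thesis by blast
    next
      case (2 n)
      then have "(nu B n, nu B (iota B n)) \<in> adj B" using h unfolding adj_def by auto
      moreover have "p = map_prod e1 e1 (nu B n, nu B (iota B n))" using h 2 by (simp add: e1_def)
      ultimately show ?thesis by blast
    qed
  qed
  show "map_prod e0 e0 ` adj A \<union> map_prod e1 e1 ` adj B \<subseteq> adj (du A B)"
  proof
    fix p assume "p \<in> map_prod e0 e0 ` adj A \<union> map_prod e1 e1 ` adj B"
    then consider (a) h where "h \<in> H A" "iota A h \<noteq> h" "p = (e0 (nu A h), e0 (nu A (iota A h)))"
      | (b) h where "h \<in> H B" "iota B h \<noteq> h" "p = (e1 (nu B h), e1 (nu B (iota B h)))"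
      unfolding adj_def by auto
    then show "p \<in> adj (du A B)"
    proof cases
      case a
      then have "2*h \<in> H (du A B)" "iota (du A B) (2*h) \<noteq> 2*h"
        "p = (nu (du A B) (2*h), nu (du A B) (iota (du A B) (2*h)))" by (auto simp: e0_def)
      then show ?thesis unfolding adj_def by blast
    next
      case b
      then have "Suc (2*h) \<in> H (du A B)" "iota (du A B) (Suc (2*h)) \<noteq> Suc (2*h)"
        "p = (nu (du A B) (Suc (2*h)), nu (du A B) (iota (du A B) (Suc (2*h))))" by (auto simp: e1_def)
      then show ?thesis unfolding adj_def by blast
    qed
  qed
qed

lemma rtrancl_du0:
  assumes "(e0 x, y') \<in> (map_prod e0 e0 ` R1 \<union> map_prod e1 e1 ` R2)\<^sup>*"
  shows "\<exists>y. y' = e0 y \<and> (x, y) \<in> R1\<^sup>*"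
  using assms
proof (induction rule: rtrancl_induct)
  case base then show ?case by blast
next
  case (step y' z')
  obtain y where y: "y' = e0 y" "(x, y) \<in> R1\<^sup>*" using step.IH by blast
  from step(2) consider (a) a b where "(a, b) \<in> R1" "y' = e0 a" "z' = e0 b"
    | (b) a b where "(a, b) \<in> R2" "y' = e1 a" "z' = e1 b" by auto
  then show ?case
  proof cases
    case a
    then have "a = y" using y by (simp add: e0_def)
    then have "(x, b) \<in> R1\<^sup>*" using a y by (meson rtrancl.rtrancl_into_rtrancl)
    then show ?thesis using a by blast
  next
    case b
    then have False using y unfolding e0_def e1_def by presburger
    then show ?thesis ..
  qed
qed

lemma rtrancl_du1:
  assumes "(e1 x, y') \<in> (map_prod e0 e0 ` R1 \<union> map_prod e1 e1 ` R2)\<^sup>*"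
  shows "\<exists>y. y' = e1 y \<and> (x, y) \<in> R2\<^sup>*"
  using assms
proof (induction rule: rtrancl_induct)
  case base then show ?case by blast
next
  case (step y' z')
  obtain y where y: "y' = e1 y" "(x, y) \<in> R2\<^sup>*" using step.IH by blast
  from step(2) consider (a) a b where "(a, b) \<in> R1" "y' = e0 a" "z' = e0 b"
    | (b) a b where "(a, b) \<in> R2" "y' = e1 a" "z' = e1 b" by auto
  then show ?case
  proof cases
    case b
    then have "a = y" using y by (simp add: e1_def)
    then have "(x, b) \<in> R2\<^sup>*" using b y by (meson rtrancl.rtrancl_into_rtrancl)
    then show ?thesis using b by blast
  next
    case a
    then have False using y unfolding e0_def e1_def by presburger
    then show ?thesis ..
  qed
qed

lemma adj_du_rtrancl:
  "(2*a, 2*b) \<in> (adj (du A B))\<^sup>* \<longleftrightarrow> (a, b) \<in> (adj A)\<^sup>*"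
  "(Suc (2*a), Suc (2*b)) \<in> (adj (du A B))\<^sup>* \<longleftrightarrow> (a, b) \<in> (adj B)\<^sup>*"
  "(2*a, Suc (2*b)) \<notin> (adj (du A B))\<^sup>*"
  "(Suc (2*a), 2*b) \<notin> (adj (du A B))\<^sup>*"
proof -
  show "(2*a, 2*b) \<in> (adj (du A B))\<^sup>* \<longleftrightarrow> (a, b) \<in> (adj A)\<^sup>*"
  proof
    assume "(2*a, 2*b) \<in> (adj (du A B))\<^sup>*"
    then have "(e0 a, e0 b) \<in> (map_prod e0 e0 ` adj A \<union> map_prod e1 e1 ` adj B)\<^sup>*"
      unfolding adj_du e0_def .
    from rtrancl_du0[OF this] show "(a, b) \<in> (adj A)\<^sup>*" by (auto simp: e0_def)
  next
    assume "(a, b) \<in> (adj A)\<^sup>*"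
    from rtrancl_map_fwd[OF this, of e0] have "(e0 a, e0 b) \<in> (adj (du A B))\<^sup>*"
      unfolding adj_du by (meson Un_upper1 rtrancl_mono subsetD)
    then show "(2*a, 2*b) \<in> (adj (du A B))\<^sup>*" by (simp add: e0_def)
  qed
  show "(Suc (2*a), Suc (2*b)) \<in> (adj (du A B))\<^sup>* \<longleftrightarrow> (a, b) \<in> (adj B)\<^sup>*"
  proof
    assume "(Suc (2*a), Suc (2*b)) \<in> (adj (du A B))\<^sup>*"
    then have "(e1 a, e1 b) \<in> (map_prod e0 e0 ` adj A \<union> map_prod e1 e1 ` adj B)\<^sup>*"
      unfolding adj_du e1_def .
    from rtrancl_du1[OF this] show "(a, b) \<in> (adj B)\<^sup>*" by (auto simp: e1_def)
  next
    assume "(a, b) \<in> (adj B)\<^sup>*"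
    from rtrancl_map_fwd[OF this, of e1] have "(e1 a, e1 b) \<in> (adj (du A B))\<^sup>*"
      unfolding adj_du by (meson Un_upper2 rtrancl_mono subsetD)
    then show "(Suc (2*a), Suc (2*b)) \<in> (adj (du A B))\<^sup>*" by (simp add: e1_def)
  qed
  show "(2*a, Suc (2*b)) \<notin> (adj (du A B))\<^sup>*"
  proof
    assume "(2*a, Suc (2*b)) \<in> (adj (du A B))\<^sup>*"
    then have "(e0 a, Suc (2*b)) \<in> (map_prod e0 e0 ` adj A \<union> map_prod e1 e1 ` adj B)\<^sup>*"
      unfolding adj_du e0_def .
    from rtrancl_du0[OF this] show False unfolding e0_def by presburger
  qed
  show "(Suc (2*a), 2*b) \<notin> (adj (du A B))\<^sup>*"
  proof
    assume "(Suc (2*a), 2*b) \<in> (adj (du A B))\<^sup>*"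
    then have "(e1 a, 2*b) \<in> (map_prod e0 e0 ` adj A \<union> map_prod e1 e1 ` adj B)\<^sup>*"
      unfolding adj_du e1_def .
    from rtrancl_du1[OF this] show False unfolding e1_def by presburger
  qed
qed

lemma fR_du: "map_prod e0 e0 ` fR A \<subseteq> fR (du A B)" "map_prod e1 e1 ` fR B \<subseteq> fR (du A B)"
proof -
  show "map_prod e0 e0 ` fR A \<subseteq> fR (du A B)"
  proof
    fix p assume "p \<in> map_prod e0 e0 ` fR A"
    then obtain x y where "(x, y) \<in> fR A" "p = (2*x, 2*y)" by (auto simp: e0_def)
    then show "p \<in> fR (du A B)" unfolding fR_def by force
  qed
  show "map_prod e1 e1 ` fR B \<subseteq> fR (du A B)"
  proof
    fix p assume "p \<in> map_prod e1 e1 ` fR B"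
    then obtain x y where "(x, y) \<in> fR B" "p = (Suc (2*x), Suc (2*y))" by (auto simp: e1_def)
    then show "p \<in> fR (du A B)" unfolding fR_def by force
  qed
qed

lemma fend_du:
  assumes A: "wf2 A" and B: "wf2 B"
  shows "\<And>n. n \<in> S A \<Longrightarrow> sig2 A n = n \<Longrightarrow> fend (du A B) (2*n) = 2 * fend A n"
    "\<And>n. n \<in> S B \<Longrightarrow> sig2 B n = n \<Longrightarrow> fend (du A B) (Suc (2*n)) = Suc (2 * fend B n)"
proof -
  have iA: "invK A" and iB: "invK B" and iD: "invK (du A B)" using A B wf2_du wf2_invK by auto
  fix n assume n: "n \<in> S A" "sig2 A n = n"
  have P: "faceP A n (fend A n)" by (rule fend_P[OF iA n])
  have "faceP (du A B) (2*n) (2 * fend A n)"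
    unfolding faceP_def
  proof (intro conjI)
    show "2 * fend A n \<in> S (du A B)" "2 * fend A n \<noteq> 2 * n" "sig2 (du A B) (2 * fend A n) = 2 * fend A n"
      using P unfolding faceP_def by auto
    have "(n, fend A n) \<in> (fR A)\<^sup>*" using P unfolding faceP_def by simp
    from rtrancl_map_fwd[OF this, of e0] have "(e0 n, e0 (fend A n)) \<in> (fR (du A B))\<^sup>*"
      using fR_du(1)[of A B] rtrancl_mono by blast
    then show "(2 * n, 2 * fend A n) \<in> (fR (du A B))\<^sup>*" by (simp add: e0_def)
  qed
  then show "fend (du A B) (2*n) = 2 * fend A n" using fend_eq[OF iD] n by simp
next
  have iA: "invK A" and iB: "invK B" and iD: "invK (du A B)" using A B wf2_du wf2_invK by auto
  fix n assume n: "n \<in> S B" "sig2 B n = n"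
  have P: "faceP B n (fend B n)" by (rule fend_P[OF iB n])
  have "faceP (du A B) (Suc (2*n)) (Suc (2 * fend B n))"
    unfolding faceP_def
  proof (intro conjI)
    show "Suc (2 * fend B n) \<in> S (du A B)" "Suc (2 * fend B n) \<noteq> Suc (2 * n)" "sig2 (du A B) (Suc (2 * fend B n)) = Suc (2 * fend B n)"
      using P unfolding faceP_def by auto
    have "(n, fend B n) \<in> (fR B)\<^sup>*" using P unfolding faceP_def by simp
    from rtrancl_map_fwd[OF this, of e1] have "(e1 n, e1 (fend B n)) \<in> (fR (du A B))\<^sup>*"
      using fR_du(2)[of B A] rtrancl_mono by blast
    then show "(Suc (2 * n), Suc (2 * fend B n)) \<in> (fR (du A B))\<^sup>*" by (simp add: e1_def)
  qed
  then show "fend (du A B) (Suc (2*n)) = Suc (2 * fend B n)" using fend_eq[OF iD] n by simp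
qed

lemma contr_du_iso:
  assumes A: "wf2 A" and B: "wf2 B" and FA: "FA \<subseteq> edges A" and FB: "FB \<subseteq> edges B"
  shows "iso2 (contr (du A B) (duF FA FB)) (du (contr A FA) (contr B FB))"
proof -
  let ?D = "du A B" and ?F = "duF FA FB" and ?KA = "subg A FA" and ?KB = "subg B FB"
  let ?C = "du (contr A FA) (contr B FB)"
  have D: "wf2 ?D" using wf2_du[OF A B] .
  have FD: "?F \<subseteq> edges ?D" using duF_edges[OF A B FA FB] .
  have KD: "subg ?D ?F = du ?KA ?KB" by (rule subg_du)
  have KA: "wf2 ?KA" and KB: "wf2 ?KB" using wf2_subg A B FA FB by auto
  have HH: "H (contr ?D ?F) = H ?C"
  proof (rule set_eqI)
    fix x show "x \<in> H (contr ?D ?F) \<longleftrightarrow> x \<in> H ?C"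
      unfolding H_contr[OF D FD] H_contr[OF A FA] H_contr[OF B FB] du_simps
      by (cases x rule: nat_cases2) (simp_all del: Union_iff)
  qed
  have SS: "S (contr ?D ?F) = S ?C"
  proof (rule set_eqI)
    fix x show "x \<in> S (contr ?D ?F) \<longleftrightarrow> x \<in> S ?C"
      unfolding S_contr[OF D FD] S_contr[OF A FA] S_contr[OF B FB] du_simps
      by (cases x rule: nat_cases2) (simp_all del: Union_iff)
  qed
  let ?psi = "mix (\<lambda>u. Min (comp ?KA u)) (\<lambda>u. Min (comp ?KB u))"
  show ?thesis
  proof (rule contr_crit[OF D FD, where fH = id and fS = id and psi = ?psi])
    show "bij_betw id (H (contr ?D ?F)) (H ?C)" unfolding HH by simp
    show "bij_betw id (S (contr ?D ?F)) (S ?C)" unfolding SS by simp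
  next
    fix u assume "u \<in> V ?D"
    then have "u \<in> dlab (V A) (V B)" by simp
    then show "?psi u \<in> V ?C"
      by (cases rule: dlab_cases) (auto simp: contr_simps comps_def)
  next
    fix c assume "c \<in> V ?C"
    then have "c \<in> dlab (Min ` comps ?KA) (Min ` comps ?KB)" by (simp add: contr_simps)
    then show "\<exists>u\<in>V ?D. ?psi u = c"
    proof (cases rule: dlab_cases)
      case (1 n)
      then obtain u where "u \<in> V A" "n = Min (comp ?KA u)" unfolding comps_def by auto
      then have "2*u \<in> V ?D" "?psi (2*u) = c" using 1 by auto
      then show ?thesis by blast
    next
      case (2 n)
      then obtain u where "u \<in> V B" "n = Min (comp ?KB u)" unfolding comps_def by auto
      then have "Suc (2*u) \<in> V ?D" "?psi (Suc (2*u)) = c" using 2 by auto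
      then show ?thesis by blast
    qed
  next
    fix u w assume u: "u \<in> V ?D" and w: "w \<in> V ?D"
    have cA: "\<And>a b. a \<in> V A \<Longrightarrow> b \<in> V A \<Longrightarrow> Min (comp ?KA a) = Min (comp ?KA b) \<longleftrightarrow> (a, b) \<in> (adj ?KA)\<^sup>*"
    proof -
      fix a b assume a: "a \<in> V A" and b: "b \<in> V A"
      have ab: "a \<in> V ?KA" "b \<in> V ?KA" using a b by auto
      have "Min (comp ?KA a) = Min (comp ?KA b) \<longleftrightarrow> comp ?KA a = comp ?KA b"
        using comp_Min[OF KA ab(1)] comp_Min[OF KA ab(2)] by metis
      also have "\<dots> \<longleftrightarrow> (a, b) \<in> (adj ?KA)\<^sup>*" using comp_eq_iff[OF KA ab] .
      finally show "Min (comp ?KA a) = Min (comp ?KA b) \<longleftrightarrow> (a, b) \<in> (adj ?KA)\<^sup>*" .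
    qed
    have cB: "\<And>a b. a \<in> V B \<Longrightarrow> b \<in> V B \<Longrightarrow> Min (comp ?KB a) = Min (comp ?KB b) \<longleftrightarrow> (a, b) \<in> (adj ?KB)\<^sup>*"
    proof -
      fix a b assume a: "a \<in> V B" and b: "b \<in> V B"
      have ab: "a \<in> V ?KB" "b \<in> V ?KB" using a b by auto
      have "Min (comp ?KB a) = Min (comp ?KB b) \<longleftrightarrow> comp ?KB a = comp ?KB b"
        using comp_Min[OF KB ab(1)] comp_Min[OF KB ab(2)] by metis
      also have "\<dots> \<longleftrightarrow> (a, b) \<in> (adj ?KB)\<^sup>*" using comp_eq_iff[OF KB ab] .
      finally show "Min (comp ?KB a) = Min (comp ?KB b) \<longleftrightarrow> (a, b) \<in> (adj ?KB)\<^sup>*" .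
    qed
    have u': "u \<in> dlab (V A) (V B)" and w': "w \<in> dlab (V A) (V B)" using u w by auto
    show "?psi u = ?psi w \<longleftrightarrow> (u, w) \<in> (adj (subg ?D ?F))\<^sup>*"
    proof (cases rule: dlab_cases[OF u'])
      case (1 a) note ua = this
      show ?thesis
      proof (cases rule: dlab_cases[OF w'])
        case (1 b) then show ?thesis using ua cA adj_du_rtrancl(1) KD by simp
      next
        case (2 b)
        have "?psi u \<noteq> ?psi w" using ua 2 by simp presburger
        then show ?thesis using ua 2 adj_du_rtrancl(3) KD by simp
      qed
    next
      case (2 a) note ua = this
      show ?thesis
      proof (cases rule: dlab_cases[OF w'])
        case (1 b)
        have "?psi u \<noteq> ?psi w" using ua 1 by simp presburger
        then show ?thesis using ua 1 adj_du_rtrancl(4) KD by simp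
      next
        case (2 b) then show ?thesis using ua cB adj_du_rtrancl(2) KD by simp
      qed
    qed
  next
    fix h assume "h \<in> H (contr ?D ?F)"
    then have h: "h \<in> dlab (H A) (H B)" unfolding H_contr[OF D FD] by simp
    show "nu ?C (id h) = ?psi (nu ?D h)"
      using h by (cases rule: dlab_cases) (simp_all add: contr_simps)
    show "id (iota ?D h) = iota ?C (id h)"
      using h by (cases rule: dlab_cases) (simp_all add: contr_simps)
  next
    fix s assume sC: "s \<in> S (contr ?D ?F)"
    then have s: "s \<in> dlab (S A) (S B)" unfolding S_contr[OF D FD] by simp
    show "id (mu ?D s) = mu ?C (id s)"
      using s by (cases rule: dlab_cases) (simp_all add: contr_simps)
    show "id (sig2 ?D s) = sig2 ?C (id s)"
      using s by (cases rule: dlab_cases) (simp_all add: contr_simps)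
    show "id (fend (subg ?D ?F) s) = sig1 ?C (id s)"
    proof (cases rule: dlab_cases[OF s])
      case (1 n)
      have "mu A n \<notin> \<Union>FA" using sC 1 unfolding S_contr[OF D FD] by (simp del: Union_iff)
      then have n: "n \<in> S ?KA" "sig2 ?KA n = n" using 1 by auto
      show ?thesis using fend_du(1)[OF KA KB n] 1 KD by (simp add: contr_simps)
    next
      case (2 n)
      have "mu B n \<notin> \<Union>FB" using sC 2 unfolding S_contr[OF D FD] by (simp del: Union_iff)
      then have n: "n \<in> S ?KB" "sig2 ?KB n = n" using 2 by auto
      show ?thesis using fend_du(2)[OF KA KB n] 2 KD by (simp add: contr_simps)
    qed
  qed
qed



lemma ucls_self: "wf2 G \<Longrightarrow> G \<in> ucls G"
  unfolding ucls_def using iso2_refl by blast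

lemma rep_ucls: assumes G: "wf2 G" shows "wf2 (rep (ucls G))" "iso2 G (rep (ucls G))" "ucls (rep (ucls G)) = ucls G"
proof -
  have "rep (ucls G) \<in> ucls G" unfolding rep_def using someI[of "\<lambda>x. x \<in> ucls G", OF ucls_self[OF G]] .
  then show w: "wf2 (rep (ucls G))" and i: "iso2 G (rep (ucls G))" unfolding ucls_def by auto
  show "ucls (rep (ucls G)) = ucls G" using ucls_eq_iff[OF w G] iso2_sym[OF i G] by simp
qed

lemma X_elem:
  assumes "x \<in> cclosure VV"
  obtains G F where "wf2 G" "goodV VV G" "F \<subseteq> edges G" "x = ucls (contr G F)"
    "wf2 (rep x)" "iso2 (rep x) (contr G F)" "ucls (rep x) = x"
proof -
  obtain G F where GF: "wf2 G" "goodV VV G" "F \<subseteq> edges G" "x = ucls (contr G F)"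
    using assms unfolding cclosure_alt by blast
  have C: "wf2 (contr G F)" using wf2_contr GF by blast
  note R = rep_ucls[OF C]
  show ?thesis
    using that[OF GF] R GF(4) iso2_sym[OF R(2) C] by simp
qed

lemma X_UG2: "x \<in> cclosure VV \<Longrightarrow> x \<in> UG2"
  unfolding cclosure_alt UG2_def using wf2_contr by blast

lemma wf2_empty: "wf2 empty2" unfolding wf2_def empty2_def by simp

lemma X_unit: "ucls empty2 \<in> cclosure VV"
proof -
  have e: "edges empty2 = {}" unfolding edges_def empty2_def by simp
  have C: "wf2 (contr empty2 {})" using wf2_contr[OF wf2_empty] by simp
  have "V (contr empty2 {}) = {}" "H (contr empty2 {}) = {}" "S (contr empty2 {}) = {}"
    by (simp_all add: contr_simps comps_def empty2_def)
  then have "iso2 (contr empty2 {}) empty2" unfolding iso2_def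
    by (intro exI[of _ id]) (simp add: empty2_def)
  then have "ucls (contr empty2 {}) = ucls empty2" using ucls_eq_iff[OF C wf2_empty] by simp
  moreover have "goodV VV empty2" unfolding goodV_def empty2_def by simp
  ultimately show ?thesis unfolding cclosure_alt using wf2_empty by force
qed

lemma X_mult:
  assumes x: "x \<in> cclosure VV" and y: "y \<in> cclosure VV"
  shows "ucls (du (rep x) (rep y)) \<in> cclosure VV"
proof -
  obtain GA FA where A: "wf2 GA" "goodV VV GA" "FA \<subseteq> edges GA" "wf2 (rep x)" "iso2 (rep x) (contr GA FA)"
    using X_elem[OF x] by metis
  obtain GB FB where B: "wf2 GB" "goodV VV GB" "FB \<subseteq> edges GB" "wf2 (rep y)" "iso2 (rep y) (contr GB FB)"
    using X_elem[OF y] by metis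
  have i1: "iso2 (du (rep x) (rep y)) (du (contr GA FA) (contr GB FB))" using iso2_du A(5) B(5) by blast
  have D: "wf2 (contr (du GA GB) (duF FA FB))" using wf2_contr[OF wf2_du[OF A(1) B(1)] duF_edges[OF A(1) B(1) A(3) B(3)]] .
  have i2: "iso2 (du (contr GA FA) (contr GB FB)) (contr (du GA GB) (duF FA FB))"
    using iso2_sym[OF contr_du_iso[OF A(1) B(1) A(3) B(3)] D] .
  have i: "iso2 (du (rep x) (rep y)) (contr (du GA GB) (duF FA FB))" using iso2_trans[OF i1 i2] .
  have "ucls (du (rep x) (rep y)) = ucls (contr (du GA GB) (duF FA FB))"
    using ucls_eq_iff[OF wf2_du[OF A(4) B(4)] D] i by simp
  moreover have "wf2 (du GA GB)" "goodV VV (du GA GB)" "duF FA FB \<subseteq> edges (du GA GB)"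
    using wf2_du[OF A(1) B(1)] goodV_du[OF A(1) B(1) A(2) B(2)] duF_edges[OF A(1) B(1) A(3) B(3)] by auto
  ultimately show ?thesis unfolding cclosure_alt by blast
qed

lemma X_coprod:
  assumes x: "x \<in> cclosure VV" and F2: "F2 \<subseteq> edges (rep x)"
  shows "ucls (subg (rep x) F2) \<in> cclosure VV" "ucls (contr (rep x) F2) \<in> cclosure VV"
proof -
  obtain G F where GF: "wf2 G" "goodV VV G" "F \<subseteq> edges G" "wf2 (rep x)" "iso2 (rep x) (contr G F)"
    using X_elem[OF x] by metis
  have C: "wf2 (contr G F)" using wf2_contr GF by blast
  obtain F3 where F3: "F3 \<subseteq> edges (contr G F)" "iso2 (subg (rep x) F2) (subg (contr G F) F3)"
    "iso2 (contr (rep x) F2) (contr (contr G F) F3)"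
    using iso2_subg_contr[OF GF(5) GF(4) C F2] by blast
  note SC = subg_contr_iso[OF GF(1) GF(3) F3(1)]
  have w1: "wf2 (contr (subg G (F \<union> F3)) F)" using wf2_contr[OF wf2_subg[OF GF(1) SC(1)] SC(2)] .
  have "iso2 (subg (rep x) F2) (contr (subg G (F \<union> F3)) F)"
    using iso2_trans[OF F3(2) iso2_sym[OF SC(3) w1]] .
  then have "ucls (subg (rep x) F2) = ucls (contr (subg G (F \<union> F3)) F)"
    using ucls_eq_iff[OF wf2_subg[OF GF(4) F2] w1] by simp
  moreover have "wf2 (subg G (F \<union> F3))" "goodV VV (subg G (F \<union> F3))"
    using wf2_subg[OF GF(1) SC(1)] GF(2) by auto
  ultimately show "ucls (subg (rep x) F2) \<in> cclosure VV" unfolding cclosure_alt using SC(2) by blast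
  have w2: "wf2 (contr G (F \<union> F3))" using wf2_contr[OF GF(1) SC(1)] .
  have "iso2 (contr (rep x) F2) (contr G (F \<union> F3))"
    using iso2_trans[OF F3(3) iso2_sym[OF contr_contr_iso[OF GF(1) GF(3) F3(1)] w2]] .
  then have "ucls (contr (rep x) F2) = ucls (contr G (F \<union> F3))"
    using ucls_eq_iff[OF wf2_contr[OF GF(4) F2] w2] by simp
  then show "ucls (contr (rep x) F2) \<in> cclosure VV" unfolding cclosure_alt using GF SC(1) by blast
qed

definition Lset :: "graph2 set set \<Rightarrow> elt set" where
  "Lset X = {a. finite (supp a) \<and> supp a \<subseteq> X}"

lemma supp_gbasis: "supp (gbasis x) = {x}" unfolding supp_def gbasis_def by auto

lemma supp_gmult: "supp (gmult a b) \<subseteq> (\<lambda>(x, y). ucls (du (rep x) (rep y))) ` (supp a \<times> supp b)"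
proof
  fix z assume "z \<in> supp (gmult a b)"
  then have "(\<Sum>(x, y) \<in> supp a \<times> supp b. if ucls (du (rep x) (rep y)) = z then a x * b y else 0) \<noteq> 0"
    unfolding supp_def gmult_def by simp
  then obtain p where p: "p \<in> supp a \<times> supp b"
    "(case p of (x, y) \<Rightarrow> if ucls (du (rep x) (rep y)) = z then a x * b y else 0) \<noteq> 0"
    by (meson sum.neutral)
  obtain x y where "p = (x, y)" by force
  then show "z \<in> (\<lambda>(x, y). ucls (du (rep x) (rep y))) ` (supp a \<times> supp b)"
    using p by (auto split: if_splits intro!: image_eqI[of _ _ "(x, y)"])
qed

lemma gen_Lset:
  assumes "a \<in> gen_alg (cclosure VV)"
  shows "a \<in> Lset (cclosure VV)"
  using assms
proof (induction rule: gen_alg.induct)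
  case (gen x) then show ?case unfolding Lset_def by (simp add: supp_gbasis)
next
  case unit then show ?case unfolding Lset_def gunit_def by (simp add: supp_gbasis X_unit)
next
  case zero then show ?case unfolding Lset_def supp_def by simp
next
  case (add a b)
  have "supp (\<lambda>z. a z + b z) \<subseteq> supp a \<union> supp b" unfolding supp_def by auto
  then show ?case using add.IH unfolding Lset_def by (auto intro: finite_subset)
next
  case (smult a c)
  have "supp (\<lambda>z. c * a z) \<subseteq> supp a" unfolding supp_def by auto
  then show ?case using smult.IH unfolding Lset_def by (auto intro: finite_subset)
next
  case (mult a b)
  have fin: "finite ((\<lambda>(x, y). ucls (du (rep x) (rep y))) ` (supp a \<times> supp b))"
    using mult.IH unfolding Lset_def by simp
  have sub: "(\<lambda>(x, y). ucls (du (rep x) (rep y))) ` (supp a \<times> supp b) \<subseteq> cclosure VV"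
  proof (clarify)
    fix x y assume "x \<in> supp a" "y \<in> supp b"
    then have "x \<in> cclosure VV" "y \<in> cclosure VV" using mult.IH unfolding Lset_def by auto
    then show "ucls (du (rep x) (rep y)) \<in> cclosure VV" by (rule X_mult)
  qed
  show ?case using supp_gmult[of a b] fin sub unfolding Lset_def by (auto intro: finite_subset)
qed

lemma qspan_comb:
  assumes u: "u \<in> qspan T" and v: "v \<in> qspan T"
  shows "(\<lambda>z. u z + c * v z) \<in> qspan T"
  using v
proof (induction arbitrary: c rule: qspan.induct)
  case zero then show ?case using u by simp
next
  case (step w t d)
  have "(\<lambda>z. (u z + c * w z) + (c * d) * t z) \<in> qspan T"
    using qspan.step[OF step.IH step.hyps(2)] .
  moreover have "(\<lambda>z. (u z + c * w z) + (c * d) * t z) = (\<lambda>z. u z + c * (w z + d * t z))"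
    by (auto simp: algebra_simps)
  ultimately show ?case by simp
qed

lemma qspan_base: "t \<in> T \<Longrightarrow> t \<in> qspan T"
  using qspan.step[OF qspan.zero, of t T 1] by simp

lemma qspan_sum:
  assumes "finite I" "\<And>i. i \<in> I \<Longrightarrow> f i \<in> qspan T"
  shows "(\<lambda>z. \<Sum>i\<in>I. c i * f i z) \<in> qspan T"
  using assms
proof (induction I rule: finite_induct)
  case empty then show ?case using qspan.zero by simp
next
  case (insert i I)
  have "(\<lambda>z. (\<Sum>i\<in>I. c i * f i z) + c i * f i z) \<in> qspan T"
    using qspan_comb[OF insert.IH insert.prems] insert by auto
  then show ?case using insert by (simp add: add.commute)
qed

lemma finite_edges: "wf2 G \<Longrightarrow> finite (edges G)"
proof -
  assume G: "wf2 G"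
  have "edges G \<subseteq> (\<lambda>h. {h, iota G h}) ` H G" unfolding edges_def by auto
  then show ?thesis using wf2D(2)[OF G] finite_subset by blast
qed

lemma coprod_basis_sum:
  assumes R: "wf2 (rep x)"
  shows "coprod_basis x = (\<lambda>pq. \<Sum>F\<in>Pow (edges (rep x)). 1 * gtensor (gbasis (ucls (subg (rep x) F))) (gbasis (ucls (contr (rep x) F))) pq)"
proof
  fix pq :: "graph2 set \<times> graph2 set"
  obtain p q where pq: "pq = (p, q)" by force
  let ?P = "\<lambda>F. ucls (subg (rep x) F) = p \<and> ucls (contr (rep x) F) = q"
  have fin: "finite (Pow (edges (rep x)))" using finite_edges[OF R] by simp
  have "(\<Sum>F\<in>Pow (edges (rep x)). 1 * gtensor (gbasis (ucls (subg (rep x) F))) (gbasis (ucls (contr (rep x) F))) (p, q))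
     = (\<Sum>F\<in>Pow (edges (rep x)). if ?P F then (1::rat) else 0)"
    unfolding gtensor_def gbasis_def by (intro sum.cong) auto
  also have "\<dots> = of_nat (card {F \<in> Pow (edges (rep x)). ?P F})"
    using fin by (simp add: sum.If_cases Int_def)
  also have "{F \<in> Pow (edges (rep x)). ?P F} = {F. F \<subseteq> edges (rep x) \<and> ?P F}" by auto
  finally show "coprod_basis x pq = (\<Sum>F\<in>Pow (edges (rep x)). 1 * gtensor (gbasis (ucls (subg (rep x) F))) (gbasis (ucls (contr (rep x) F))) pq)"
    unfolding coprod_basis_def pq by simp
qed

theorem mainTheorem4:
  fixes VV :: "graph1 set set"
  assumes "VV \<subseteq> UG1"
  shows "is_subbialgebra (gen_alg (cclosure VV))"
proof -
  let ?X = "cclosure VV"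
  let ?B = "gen_alg ?X"
  let ?T = "case_prod gtensor ` (?B \<times> ?B)"
  have sub: "is_subalgebra ?B"
    unfolding is_subalgebra_def
  proof (intro conjI ballI allI)
    show "?B \<subseteq> algG"
    proof
      fix a assume "a \<in> ?B"
      then have "a \<in> Lset ?X" by (rule gen_Lset)
      then show "a \<in> algG" unfolding Lset_def algG_def using X_UG2 by blast
    qed
  qed (auto intro: gen_alg.intros)
  have cb: "\<And>x. x \<in> ?X \<Longrightarrow> coprod_basis x \<in> qspan ?T"
  proof -
    fix x assume x: "x \<in> ?X"
    obtain G F where R: "wf2 (rep x)" using X_elem[OF x] by metis
    have "(\<lambda>pq. \<Sum>F\<in>Pow (edges (rep x)). 1 * gtensor (gbasis (ucls (subg (rep x) F))) (gbasis (ucls (contr (rep x) F))) pq) \<in> qspan ?T"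
    proof (rule qspan_sum)
      show "finite (Pow (edges (rep x)))" using finite_edges[OF R] by simp
    next
      fix F assume "F \<in> Pow (edges (rep x))"
      then have F: "F \<subseteq> edges (rep x)" by simp
      have "gbasis (ucls (subg (rep x) F)) \<in> ?B" "gbasis (ucls (contr (rep x) F)) \<in> ?B"
        using X_coprod[OF x F] by (auto intro: gen_alg.gen)
      then have "gtensor (gbasis (ucls (subg (rep x) F))) (gbasis (ucls (contr (rep x) F))) \<in> ?T"
        by force
      then show "gtensor (gbasis (ucls (subg (rep x) F))) (gbasis (ucls (contr (rep x) F))) \<in> qspan ?T"
        by (rule qspan_base)
    qed
    then show "coprod_basis x \<in> qspan ?T" using coprod_basis_sum[OF R] by simp
  qed
  have "\<forall>a\<in>?B. gcoprod a \<in> qspan ?T"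
  proof
    fix a assume "a \<in> ?B"
    then have L: "a \<in> Lset ?X" by (rule gen_Lset)
    show "gcoprod a \<in> qspan ?T" unfolding gcoprod_def
      by (rule qspan_sum) (use L cb in \<open>auto simp: Lset_def\<close>)
  qed
  then show ?thesis using sub unfolding is_subbialgebra_def by blast
qed

end
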